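(* Let $\varphi$ be an individually rational rule that is resource monotonic, strategy-proof and satisfies monotonic discoverability, and let $\mathbb{S}$ be the canonical pick-an-object mechanism that sequentializes $\varphi$. Then agents following straightforward strategies constitute the unique perfect ex-post equilibrium of the game induced by $\mathbb{S}$.
   Context: Let $A=\{a_1,\dots,a_n\}$ be a finite set of agents and $O=\{o_1,\dots,o_m\}\cup\{\emptyset\}$ a finite set of object types ($\emptyset$ the null object). Each agent $a$ has a strict preference $P_a$ over $O$ with weak version $R_a$; $\mathbb{P}$ is the set of strict preferences, $\mathcal{P}=\mathbb{P}^n$ the set of profiles; $P_{-a}$ denotes the others' preferences. An allocation is a function $\mu:A\to O$; a rule is $\varphi:\mathcal{P}\to\{\text{allocations}\}$, $\varphi_a(P)=\varphi(P)(a)$. Individually rational: $\varphi_a(P)R_a\emptyset$ always. Strategy-proof: $\varphi_a(P_a,P_{-a})R_a\varphi_a(P'_a,P_{-a})$ for all $a,P,P'_a$. Resource monotonic: for every agent $a^*$, profile $P$ and $P'_{a^*}$ with $\varphi_{a^*}(P'_{a^*},P_{-a^*})=\emptyset$, every $a\neq a^*$ has $\varphi_a(P'_{a^*},P_{-a^*})\,R_a\,\varphi_a(P)$. Monotonic discoverability: for $P$ and allocation $\mu$, $\mathcal{L}(P,\mu)$ is the set of profiles $P'$ such that for every $a$, $P'_a$ agrees with $P_a$ on $\mu(a)$ and on all objects $P_a$ ranks above $\mu(a)$ (same set above $\mu(a)$, same order). $\varphi$ satisfies monotonic discoverability if for every $\mu$ and $P$, either $\varphi(P)=\mu$ or some agent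 $a^*$ has $\varphi_{a^*}(P')\neq\mu(a^* )$ for all $P'\in\mathcal{L}(P,\mu)$. PAO mechanisms: a choice history is a finite (possibly empty) sequence $((\Omega_1,\omega_1),\dots,(\Omega_k,\omega_k))$, $\Omega_j\subseteq O$, $\omega_j\in\Omega_j$, with last choice $\omega_k$; $P_a$ is consistent with it if $\omega_jR_ao$ for all $j$ and $o\in\Omega_j$. A collective history $h^A=(h_1,\dots,h_n)$ is an $n$-tuple of choice histories ($h^{A-\emptyset}$: all empty); a profile $P$ is consistent with $h^A$ if each $P_{a_i}$ is consistent with $h_i$, and $P(h^A)$ is the set of such profiles. Define $\varphi(h^A)=\{\varphi(P):P\in P(h^A)\}$ and $\mu_i^\varphi(h^A)=\{\mu(a_i):\mu\in\varphi(h^A)\}$. A menu function $\mathbb{S}$ maps collective histories to $n$-tuples of subsets of $O$, with non-empty initial menus and, afterwards, agent $i$'s menu a subset of her last menu minus her last choice. The PAO mechanism $\mathbb{S}$: in period 1 every agent chooses from her initial menu; in each later period, given current $h^A$, if all menus in $\mathbb{S}(h^A)$ are empty the procedure stops and each agent receives her last choice; otherwise agents with non-empty menus choose an element; (menu, choice) is appended to each chooser's history. Straightforward strategy w.r.t. $P_a$: always choose the $P_a$-best element of the menu. $\mathbb{S}$ sequentializes $\varphi$ if straightforward play w.r.t. any $P$ yields $\varphi(P)$. The canonical PAO mechanism for $\varphi$ is given by: agent $i$'s menu $\mathbb{S}^i(h^A)$ is $\emptyset$ if $|\varphi(h^A)|=1$ or if agent $i$'s last choice in $h^A$ belongs to $\mu_i^\varphi(h^A)$,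 and is $\mu_i^\varphi(h^A)$ otherwise. Strategies and equilibrium: $H^A_{\mathbb{S}}$ is the set of collective histories that can arise, $H^A_{\mathbb{S}}(a)$ the set of agent $a$'s histories within them. A strategy for $a$ maps each pair (own history in $H^A_{\mathbb{S}}(a)\cup\{\emptyset\}$, menu $\Omega$) to an element of $\Omega$; a type-strategy maps preferences to strategies. $\mathcal{O}_a|_{h^A}(\sigma)$ is $a$'s assignment when $\mathbb{S}$ is run from $h^A$ with strategy profile $\sigma$. A type-strategy profile $(\Sigma_a)$ is a perfect ex-post equilibrium if for all $a$, all $h^A\in H^A_{\mathbb{S}}\cup\{h^{A-\emptyset}\}$, all strategies $\sigma'_a$ and all $P\in\mathcal{P}$: $\mathcal{O}_a|_{h^A}(\Sigma_a(P_a),(\Sigma_{a'}(P_{a'}))_{a'\neq a})\,R_a\,\mathcal{O}_a|_{h^A}(\sigma'_a,(\Sigma_{a'}(P_{a'}))_{a'\neq a})$. *)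

theory Defs
  imports Main
begin

text \<open>A strict preference is a strict linear order
  on all objects, given as a relation p (p x y: x strictly preferred to y).\<close>

type_synonym 'o pref = "'o \<Rightarrow> 'o \<Rightarrow> bool"
type_synonym ('a, 'o) profile = "'a \<Rightarrow> 'o pref"
type_synonym ('a, 'o) rule = "('a, 'o) profile \<Rightarrow> 'a \<Rightarrow> 'o"
type_synonym 'o chist = "('o set \<times> 'o) list"
type_synonym ('a, 'o) chistA = "'a \<Rightarrow> 'o chist"
type_synonym ('a, 'o) menufun = "('a, 'o) chistA \<Rightarrow> 'a \<Rightarrow> 'o set"
type_synonym 'o strategy = "'o chist \<Rightarrow> 'o set \<Rightarrow> 'o"

definition strict_pref :: "'o pref \<Rightarrow> bool" where
  "strict_pref p \<longleftrightarrow> (\<forall>x. \<not> p x x) \<and> (\<forall>x y z. p x y \<longrightarrow> p y z \<longrightarrow> p x z)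
     \<and> (\<forall>x y. x \<noteq> y \<longrightarrow> p x y \<or> p y x)"

definition weak :: "'o pref \<Rightarrow> 'o \<Rightarrow> 'o \<Rightarrow> bool" where
  "weak p x y \<longleftrightarrow> x = y \<or> p x y"

definition valid_profile :: "('a, 'o) profile \<Rightarrow> bool" where
  "valid_profile P \<longleftrightarrow> (\<forall>a. strict_pref (P a))"

definition individually_rational :: "'o \<Rightarrow> ('a, 'o) rule \<Rightarrow> bool" where
  "individually_rational null \<phi> \<longleftrightarrow>
     (\<forall>P a. valid_profile P \<longrightarrow> weak (P a) (\<phi> P a) null)"

definition strategy_proof :: "('a, 'o) rule \<Rightarrow> bool" where
  "strategy_proof \<phi> \<longleftrightarrow>
     (\<forall>P a p'. valid_profile P \<longrightarrow> strict_pref p' \<longrightarrow>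
        weak (P a) (\<phi> P a) (\<phi> (P(a := p')) a))"

definition resource_monotonic :: "'o \<Rightarrow> ('a, 'o) rule \<Rightarrow> bool" where
  "resource_monotonic null \<phi> \<longleftrightarrow>
     (\<forall>astar P p'. valid_profile P \<longrightarrow> strict_pref p' \<longrightarrow>
        \<phi> (P(astar := p')) astar = null \<longrightarrow>
        (\<forall>a. a \<noteq> astar \<longrightarrow> weak (P a) (\<phi> (P(astar := p')) a) (\<phi> P a)))"

definition upper :: "'o pref \<Rightarrow> 'o \<Rightarrow> 'o set" where
  "upper p ob = {x. weak p x ob}"

definition Lset :: "('a, 'o) profile \<Rightarrow> ('a \<Rightarrow> 'o) \<Rightarrow> ('a, 'o) profile set" where
  "Lset P \<mu> = {P'. valid_profile P' \<and>
     (\<forall>a. upper (P' a) (\<mu> a) = upper (P a) (\<mu> a) \<and>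
          (\<forall>x\<in>upper (P a) (\<mu> a). \<forall>y\<in>upper (P a) (\<mu> a). P' a x y \<longleftrightarrow> P a x y))}"

definition monotonic_discoverability :: "('a, 'o) rule \<Rightarrow> bool" where
  "monotonic_discoverability \<phi> \<longleftrightarrow>
     (\<forall>\<mu> P. valid_profile P \<longrightarrow>
        \<phi> P = \<mu> \<or> (\<exists>astar. \<forall>P'\<in>Lset P \<mu>. \<phi> P' astar \<noteq> \<mu> astar))"

definition consistent :: "'o pref \<Rightarrow> 'o chist \<Rightarrow> bool" where
  "consistent p h \<longleftrightarrow> (\<forall>(\<Omega>, \<omega>) \<in> set h. \<forall>ob\<in>\<Omega>. weak p \<omega> ob)"

definition consistent_profiles :: "('a, 'o) chistA \<Rightarrow> ('a, 'o) profile set" where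
  "consistent_profiles hA = {P. valid_profile P \<and> (\<forall>a. consistent (P a) (hA a))}"

definition rule_hist :: "('a, 'o) rule \<Rightarrow> ('a, 'o) chistA \<Rightarrow> ('a \<Rightarrow> 'o) set" where
  "rule_hist \<phi> hA = \<phi> ` consistent_profiles hA"

definition mu_hist :: "('a, 'o) rule \<Rightarrow> ('a, 'o) chistA \<Rightarrow> 'a \<Rightarrow> 'o set" where
  "mu_hist \<phi> hA i = (\<lambda>\<mu>. \<mu> i) ` rule_hist \<phi> hA"

definition empty_hist :: "('a, 'o) chistA" where
  "empty_hist = (\<lambda>_. [])"

definition canonical_menu :: "('a, 'o) rule \<Rightarrow> ('a, 'o) menufun" where
  "canonical_menu \<phi> hA i =
     (if card (rule_hist \<phi> hA) = 1 then {}
      else if hA i \<noteq> [] \<and> snd (last (hA i)) \<in> mu_hist \<phi> hA i then {}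
      else mu_hist \<phi> hA i)"

inductive reachable :: "('a, 'o) menufun \<Rightarrow> ('a, 'o) chistA \<Rightarrow> bool" for S where
  start: "reachable S empty_hist"
| step: "reachable S h \<Longrightarrow> \<not> (\<forall>i. S h i = {}) \<Longrightarrow> (\<forall>i. S h i \<noteq> {} \<longrightarrow> c i \<in> S h i)
         \<Longrightarrow> reachable S (\<lambda>i. if S h i = {} then h i else h i @ [(S h i, c i)])"

definition is_PAO :: "('a, 'o) menufun \<Rightarrow> bool" where
  "is_PAO S \<longleftrightarrow> (\<forall>i. S empty_hist i \<noteq> {}) \<and>
     (\<forall>h i. reachable S h \<longrightarrow> h i \<noteq> [] \<longrightarrow>
        S h i \<subseteq> fst (last (h i)) - {snd (last (h i))})"

definition mstep :: "('a, 'o) menufun \<Rightarrow> ('a \<Rightarrow> 'o strategy) \<Rightarrow> ('a, 'o) chistA \<Rightarrow> ('a, 'o) chistA" where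
  "mstep S \<sigma> h = (\<lambda>i. if S h i = {} then h i else h i @ [(S h i, \<sigma> i (h i) (S h i))])"

inductive runs_to :: "('a, 'o) menufun \<Rightarrow> ('a \<Rightarrow> 'o strategy) \<Rightarrow> ('a, 'o) chistA \<Rightarrow> ('a, 'o) chistA \<Rightarrow> bool"
  for S \<sigma> where
  stop: "(\<forall>i. S h i = {}) \<Longrightarrow> runs_to S \<sigma> h h"
| go: "\<not> (\<forall>i. S h i = {}) \<Longrightarrow> runs_to S \<sigma> (mstep S \<sigma> h) h' \<Longrightarrow> runs_to S \<sigma> h h'"

definition outcome :: "('a, 'o) menufun \<Rightarrow> ('a \<Rightarrow> 'o strategy) \<Rightarrow> ('a, 'o) chistA \<Rightarrow> 'a \<Rightarrow> 'o" where
  "outcome S \<sigma> hA a = snd (last ((THE h'. runs_to S \<sigma> hA h') a))"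

definition best :: "'o pref \<Rightarrow> 'o set \<Rightarrow> 'o" where
  "best p \<Omega> = (THE x. x \<in> \<Omega> \<and> (\<forall>y\<in>\<Omega>. y \<noteq> x \<longrightarrow> p x y))"

definition straightforward :: "'o pref \<Rightarrow> 'o strategy" where
  "straightforward p = (\<lambda>h \<Omega>. best p \<Omega>)"

definition sequentializes :: "('a, 'o) menufun \<Rightarrow> ('a, 'o) rule \<Rightarrow> bool" where
  "sequentializes S \<phi> \<longleftrightarrow>
     (\<forall>P. valid_profile P \<longrightarrow>
        (\<forall>a. outcome S (\<lambda>b. straightforward (P b)) empty_hist a = \<phi> P a))"

definition valid_strategy :: "'o strategy \<Rightarrow> bool" where
  "valid_strategy \<sigma> \<longleftrightarrow> (\<forall>h \<Omega>. \<Omega> \<noteq> {} \<longrightarrow> \<sigma> h \<Omega> \<in> \<Omega>)"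

definition valid_type_strategy :: "('a \<Rightarrow> 'o pref \<Rightarrow> 'o strategy) \<Rightarrow> bool" where
  "valid_type_strategy \<Sigma> \<longleftrightarrow> (\<forall>a p. strict_pref p \<longrightarrow> valid_strategy (\<Sigma> a p))"

definition perfect_ex_post_eq :: "('a, 'o) menufun \<Rightarrow> ('a \<Rightarrow> 'o pref \<Rightarrow> 'o strategy) \<Rightarrow> bool" where
  "perfect_ex_post_eq S \<Sigma> \<longleftrightarrow>
     (\<forall>a hA \<sigma>' P. reachable S hA \<longrightarrow> valid_strategy \<sigma>' \<longrightarrow> valid_profile P \<longrightarrow>
        weak (P a) (outcome S (\<lambda>b. \<Sigma> b (P b)) hA a)
                   (outcome S ((\<lambda>b. \<Sigma> b (P b))(a := \<sigma>')) hA a))"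

end

theory Submission
  imports Defs
begin

section \<open>Preferences\<close>

lemma sp_irrefl: "strict_pref p \<Longrightarrow> \<not> p x x"
  by (simp add: strict_pref_def)
lemma sp_trans: "strict_pref p \<Longrightarrow> p x y \<Longrightarrow> p y z \<Longrightarrow> p x z"
  unfolding strict_pref_def by blast
lemma sp_total: "strict_pref p \<Longrightarrow> x \<noteq> y \<Longrightarrow> p x y \<or> p y x"
  unfolding strict_pref_def by blast
lemma sp_asym: "strict_pref p \<Longrightarrow> p x y \<Longrightarrow> \<not> p y x"
  using sp_irrefl sp_trans by metis
lemma weak_refl[simp]: "weak p x x"
  by (simp add: weak_def)
lemma weak_antisym: "strict_pref p \<Longrightarrow> weak p x y \<Longrightarrow> weak p y x \<Longrightarrow> x = y"
  unfolding weak_def using sp_asym by metis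
lemma weak_trans: "strict_pref p \<Longrightarrow> weak p x y \<Longrightarrow> weak p y z \<Longrightarrow> weak p x z"
  unfolding weak_def using sp_trans by metis
lemma weak_not: "strict_pref p \<Longrightarrow> weak p x y \<Longrightarrow> p y x \<Longrightarrow> False"
  unfolding weak_def using sp_asym sp_irrefl by metis

lemma best_exists:
  assumes "strict_pref p" "finite \<Omega>" "\<Omega> \<noteq> {}"
  shows "\<exists>x\<in>\<Omega>. \<forall>y\<in>\<Omega>. y \<noteq> x \<longrightarrow> p x y"
  using assms(2,3)
proof (induction rule: finite_ne_induct)
  case (singleton x) then show ?case by simp
next
  case (insert z F)
  then obtain x where x: "x \<in> F" "\<forall>y\<in>F. y \<noteq> x \<longrightarrow> p x y" by blast
  show ?case
  proof (cases "p z x")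
    case True
    then show ?thesis using x sp_trans[OF assms(1)] sp_irrefl[OF assms(1)] by (metis insert_iff)
  next
    case False
    then have "x \<noteq> z \<longrightarrow> p x z" using sp_total[OF assms(1)] by metis
    then show ?thesis using x insert.hyps by auto
  qed
qed

lemma best_char:
  assumes "strict_pref p" "x \<in> \<Omega>" "\<forall>y\<in>\<Omega>. y \<noteq> x \<longrightarrow> p x y"
  shows "best p \<Omega> = x"
  unfolding best_def
proof (rule the_equality)
  show "x \<in> \<Omega> \<and> (\<forall>y\<in>\<Omega>. y \<noteq> x \<longrightarrow> p x y)" using assms by blast
next
  fix z assume "z \<in> \<Omega> \<and> (\<forall>y\<in>\<Omega>. y \<noteq> z \<longrightarrow> p z y)"
  then show "z = x" using assms sp_asym by metis
qed

lemma best_prop: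
  fixes \<Omega> :: "'o::finite set"
  assumes "strict_pref p" "\<Omega> \<noteq> {}"
  shows "best p \<Omega> \<in> \<Omega> \<and> (\<forall>y\<in>\<Omega>. y \<noteq> best p \<Omega> \<longrightarrow> p (best p \<Omega>) y)"
proof -
  obtain x where "x \<in> \<Omega>" "\<forall>y\<in>\<Omega>. y \<noteq> x \<longrightarrow> p x y"
    using best_exists[OF assms(1) _ assms(2)] by auto
  moreover then have "best p \<Omega> = x" using best_char assms by metis
  ultimately show ?thesis by simp
qed

lemma best_in: "strict_pref p \<Longrightarrow> (\<Omega>::'o::finite set) \<noteq> {} \<Longrightarrow> best p \<Omega> \<in> \<Omega>"
  using best_prop by blast

lemma best_weak: "strict_pref p \<Longrightarrow> (\<Omega>::'o::finite set) \<noteq> {} \<Longrightarrow> y \<in> \<Omega> \<Longrightarrow> weak p (best p \<Omega>) y"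
  using best_prop unfolding weak_def by metis

lemma best_weak_eq: "strict_pref p \<Longrightarrow> c \<in> \<Omega> \<Longrightarrow> \<forall>y\<in>\<Omega>. weak p c y \<Longrightarrow> best p \<Omega> = c"
  by (rule best_char) (auto simp: weak_def)

lemma best_cong:
  assumes "strict_pref p" "strict_pref q" "(\<Omega>::'o::finite set) \<noteq> {}"
    "\<forall>x\<in>\<Omega>. \<forall>y\<in>\<Omega>. p x y = q x y"
  shows "best p \<Omega> = best q \<Omega>"
proof -
  have "best p \<Omega> \<in> \<Omega>" "\<forall>y\<in>\<Omega>. y \<noteq> best p \<Omega> \<longrightarrow> p (best p \<Omega>) y"
    using best_prop[OF assms(1,3)] by auto
  then show ?thesis using best_char[OF assms(2)] assms(4) by metis
qed

section \<open>Lifting choices to the top\<close>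

definition tp :: "'o \<Rightarrow> 'o pref \<Rightarrow> 'o pref" where
  "tp c T = (\<lambda>x y. (x = c \<and> y \<noteq> c) \<or> (x \<noteq> c \<and> y \<noteq> c \<and> T x y))"

definition lft :: "'o list \<Rightarrow> 'o pref \<Rightarrow> 'o pref" where
  "lft L T = foldr tp L T"

lemma lft_Nil[simp]: "lft [] T = T" by (simp add: lft_def)
lemma lft_Cons[simp]: "lft (c # L) T = tp c (lft L T)" by (simp add: lft_def)
lemma lft_append: "lft (L1 @ L2) T = lft L1 (lft L2 T)" by (simp add: lft_def)
lemma lft_snoc: "lft (L @ [c]) T = lft L (tp c T)" by (simp add: lft_append)

lemma tp_strict: "strict_pref T \<Longrightarrow> strict_pref (tp c T)"
  unfolding strict_pref_def tp_def by blast

lemma lft_strict: "strict_pref T \<Longrightarrow> strict_pref (lft L T)"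
  by (induction L) (auto simp: tp_strict)

lemma tp_idem: "tp c (tp c T) = tp c T"
  unfolding tp_def by (intro ext) auto

lemma lft_out: "x \<notin> set L \<Longrightarrow> y \<notin> set L \<Longrightarrow> lft L T x y = T x y"
  by (induction L) (auto simp: tp_def)

lemma lft_in: "x \<in> set L \<or> y \<in> set L \<Longrightarrow> lft L T x y = lft L T' x y"
proof (induction L)
  case Nil then show ?case by simp
next
  case (Cons c L)
  show ?case
  proof (cases "x = c \<or> y = c")
    case True then show ?thesis by (auto simp: tp_def)
  next
    case False then show ?thesis using Cons by (auto simp: tp_def)
  qed
qed

lemma lft_cases: "lft L T x y \<Longrightarrow> x \<in> set L \<or> (x \<notin> set L \<and> y \<notin> set L \<and> T x y)"
  by (induction L) (auto simp: tp_def)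

lemma lft_congr: "(\<And>x y. x \<notin> set L \<Longrightarrow> y \<notin> set L \<Longrightarrow> T x y = T' x y) \<Longrightarrow> lft L T = lft L T'"
proof (intro ext)
  fix x y assume a: "\<And>x y. x \<notin> set L \<Longrightarrow> y \<notin> set L \<Longrightarrow> T x y = T' x y"
  show "lft L T x y = lft L T' x y"
  proof (cases "x \<in> set L \<or> y \<in> set L")
    case True then show ?thesis using lft_in by metis
  next
    case False then show ?thesis using lft_out a by metis
  qed
qed

lemma lft_nth:
  "k < length L \<Longrightarrow> L ! k \<notin> set (take k L) \<Longrightarrow> ob \<notin> set (take (Suc k) L) \<Longrightarrow> lft L T (L ! k) ob"
proof (induction L arbitrary: k)
  case Nil then show ?case by simp
next
  case (Cons c L)
  show ?case
  proof (cases k)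
    case 0 then show ?thesis using Cons by (auto simp: tp_def)
  next
    case (Suc k')
    then show ?thesis using Cons.prems Cons.IH[of k'] by (auto simp: tp_def)
  qed
qed

section \<open>Histories\<close>

abbreviation chs :: "'o chist \<Rightarrow> 'o list" where "chs h \<equiv> map snd h"

definition okh :: "'o chist \<Rightarrow> bool" where
  "okh h \<longleftrightarrow> (\<forall>k<length h. snd (h!k) \<in> fst (h!k)) \<and>
     (\<forall>k l. k < l \<longrightarrow> l < length h \<longrightarrow> fst (h!l) \<subseteq> fst (h!k) \<and> snd (h!k) \<notin> fst (h!l))"

lemma okh_Nil[simp]: "okh []" by (simp add: okh_def)

lemma okh_snoc:
  assumes "okh h" "c \<in> M" "h \<noteq> [] \<Longrightarrow> M \<subseteq> fst (last h) - {snd (last h)}"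
  shows "okh (h @ [(M, c)])"
proof -
  have lastn: "h \<noteq> [] \<Longrightarrow> last h = h ! (length h - 1)" by (simp add: last_conv_nth)
  have A: "\<forall>k<length (h @ [(M, c)]). snd ((h @ [(M, c)])!k) \<in> fst ((h @ [(M, c)])!k)"
    using assms(1,2) unfolding okh_def by (auto simp: nth_append)
  have B: "fst ((h @ [(M, c)])!l) \<subseteq> fst ((h @ [(M, c)])!k) \<and> snd ((h @ [(M, c)])!k) \<notin> fst ((h @ [(M, c)])!l)"
    if kl: "k < l" "l < length (h @ [(M, c)])" for k l
  proof (cases "l < length h")
    case True then show ?thesis using assms(1) kl unfolding okh_def by (auto simp: nth_append)
  next
    case False
    then have l: "l = length h" using kl by simp
    then have hne: "h \<noteq> []" using kl by auto
    have M: "M \<subseteq> fst (last h) - {snd (last h)}" using assms(3) hne by blast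
    have lk: "k \<le> length h - 1" using kl l by simp
    show ?thesis
    proof (cases "k = length h - 1")
      case True then show ?thesis using M l lastn[OF hne] kl by (auto simp: nth_append)
    next
      case False
      then have "k < length h - 1" using lk by simp
      then have "fst (h ! (length h - 1)) \<subseteq> fst (h!k) \<and> snd (h!k) \<notin> fst (h ! (length h - 1))"
        using assms(1) hne unfolding okh_def by (metis diff_less length_greater_0_conv zero_less_one)
      then show ?thesis using M l lastn[OF hne] kl \<open>k < length h - 1\<close> by (auto simp: nth_append)
    qed
  qed
  show ?thesis unfolding okh_def using A B by blast
qed

lemma okh_prefix:
  assumes "okh (h @ e)" shows "okh h"
proof -
  have A: "\<forall>k<length h. snd (h!k) \<in> fst (h!k)"
  proof (intro allI impI)
    fix k assume k: "k < length h"
    then have "snd ((h@e)!k) \<in> fst ((h@e)!k)" using assms unfolding okh_def by simp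
    then show "snd (h!k) \<in> fst (h!k)" using k by (simp add: nth_append)
  qed
  have B: "\<forall>k l. k < l \<longrightarrow> l < length h \<longrightarrow> fst (h!l) \<subseteq> fst (h!k) \<and> snd (h!k) \<notin> fst (h!l)"
  proof (intro allI impI)
    fix k l assume kl: "k < l" "l < length h"
    then have "fst ((h@e)!l) \<subseteq> fst ((h@e)!k) \<and> snd ((h@e)!k) \<notin> fst ((h@e)!l)"
      using assms unfolding okh_def by simp
    moreover have "k < length h" using kl by simp
    moreover have "(h@e)!l = h!l" "(h@e)!k = h!k" using kl \<open>k < length h\<close> by (simp_all add: nth_append)
    ultimately show "fst (h!l) \<subseteq> fst (h!k) \<and> snd (h!k) \<notin> fst (h!l)" by simp
  qed
  show ?thesis unfolding okh_def using A B by blast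
qed

lemma in_take_nth:
  assumes "x \<in> set (take k xs)" shows "\<exists>j<k. j < length xs \<and> xs ! j = x"
proof -
  obtain j where j: "j < length (take k xs)" "take k xs ! j = x" using assms by (auto simp: in_set_conv_nth)
  then show ?thesis by (intro exI[of _ j]) auto
qed

lemma okh_D1: "okh h \<Longrightarrow> k < length h \<Longrightarrow> snd (h!k) \<in> fst (h!k)"
  unfolding okh_def by blast

lemma okh_D2: "okh h \<Longrightarrow> k < l \<Longrightarrow> l < length h \<Longrightarrow> fst (h!l) \<subseteq> fst (h!k) \<and> snd (h!k) \<notin> fst (h!l)"
  unfolding okh_def by blast

lemma okh_nth_notin:
  assumes "okh h" "k < length h"
  shows "chs h ! k \<notin> set (take k (chs h))"
proof
  assume "chs h ! k \<in> set (take k (chs h))"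
  then obtain j where j: "j < k" "j < length (chs h)" "chs h ! j = chs h ! k"
    using in_take_nth by metis
  then have "snd (h!j) \<notin> fst (h!k)" using okh_D2[OF assms(1) j(1) assms(2)] by blast
  moreover have "snd (h!k) \<in> fst (h!k)" using okh_D1[OF assms] .
  moreover have "snd (h!j) = snd (h!k)" using j assms(2) by simp
  ultimately show False by simp
qed

lemma okh_menu_notin:
  assumes "okh h" "k < length h" "ob \<in> fst (h!k)"
  shows "ob \<notin> set (take k (chs h))"
proof
  assume "ob \<in> set (take k (chs h))"
  then obtain j where j: "j < k" "j < length (chs h)" "chs h ! j = ob"
    using in_take_nth by metis
  then have "snd (h!j) \<notin> fst (h!k)" using okh_D2[OF assms(1) j(1) assms(2)] by blast
  moreover have "snd (h!j) = ob" using j by simp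
  ultimately show False using assms(3) by simp
qed

lemma okh_consistent:
  assumes "okh h"
  shows "consistent (lft (chs h) T) h"
  unfolding consistent_def
proof (intro ballI)
  fix e assume e: "e \<in> set h"
  obtain \<Omega> \<omega> where eq: "e = (\<Omega>, \<omega>)" by (cases e)
  obtain k where k: "k < length h" "h!k = (\<Omega>, \<omega>)" using e eq by (metis in_set_conv_nth)
  have "weak (lft (chs h) T) \<omega> ob" if ob: "ob \<in> \<Omega>" for ob
  proof (cases "ob = \<omega>")
    case True then show ?thesis by simp
  next
    case False
    have w: "\<omega> = chs h ! k" using k by simp
    have "ob \<notin> set (take k (chs h))" using okh_menu_notin[OF assms k(1)] k ob by simp
    moreover have "take (Suc k) (chs h) = take k (chs h) @ [chs h ! k]"
      using k(1) by (simp add: take_Suc_conv_app_nth)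
    ultimately have "ob \<notin> set (take (Suc k) (chs h))" using False w by simp
    moreover have "k < length (chs h)" using k by simp
    ultimately have "lft (chs h) T (chs h ! k) ob"
      using lft_nth okh_nth_notin[OF assms k(1)] by metis
    then show ?thesis using w by (simp add: weak_def)
  qed
  then show "case e of (\<Omega>, \<omega>) \<Rightarrow> \<forall>ob\<in>\<Omega>. weak (lft (chs h) T) \<omega> ob" using eq by simp
qed

lemma okh_last_menu_disj:
  assumes "okh h" "h \<noteq> []" "M \<subseteq> fst (last h) - {snd (last h)}"
  shows "M \<inter> set (chs h) = {}"
proof -
  have L: "last h = h ! (length h - 1)" using assms(2) by (simp add: last_conv_nth)
  have "ob \<notin> set (chs h)" if "ob \<in> M" for ob
  proof
    assume "ob \<in> set (chs h)"
    then obtain j where j: "j < length h" "snd (h!j) = ob" by (auto simp: in_set_conv_nth)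
    show False
    proof (cases "j = length h - 1")
      case True then show ?thesis using assms(3) that j L by auto
    next
      case False
      then have "j < length h - 1" using j by simp
      moreover have "length h - 1 < length h" using assms(2) by simp
      ultimately have "snd (h!j) \<notin> fst (h ! (length h - 1))" using okh_D2[OF assms(1)] by blast
      then show ?thesis using assms(3) that j L by auto
    qed
  qed
  then show ?thesis by blast
qed

lemma consistent_append: "consistent p (h @ e) \<longleftrightarrow> consistent p h \<and> consistent p e"
  unfolding consistent_def by auto

section \<open>Runs of a PAO mechanism\<close>

definition meas :: "('a::finite, 'o::finite) chistA \<Rightarrow> nat" where
  "meas h = (\<Sum>i\<in>UNIV. if h i = [] then Suc (card (UNIV::'o set)) else card (fst (last (h i))))"

definition vstrat :: "('a \<Rightarrow> 'o strategy) \<Rightarrow> bool" where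
  "vstrat \<sigma> \<longleftrightarrow> (\<forall>i. valid_strategy (\<sigma> i))"

lemma mstep_cong:
  "(\<And>i. S h i \<noteq> {} \<Longrightarrow> \<sigma> i (h i) (S h i) = \<sigma>' i (h i) (S h i)) \<Longrightarrow> mstep S \<sigma> h = mstep S \<sigma>' h"
  unfolding mstep_def by (intro ext) auto

lemma mstep_ext: "\<exists>e. mstep S \<sigma> h i = h i @ e"
  unfolding mstep_def by auto

lemma runs_det: "runs_to S \<sigma> h h1 \<Longrightarrow> runs_to S \<sigma> h h2 \<Longrightarrow> h1 = h2"
proof (induction h h1 arbitrary: h2 rule: runs_to.induct)
  case (stop h)
  from stop.prems show ?case
  proof (cases rule: runs_to.cases)
    case stop then show ?thesis by simp
  next
    case go then show ?thesis using stop.hyps by simp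
  qed
next
  case (go h h')
  from go.prems show ?case
  proof (cases rule: runs_to.cases)
    case stop then show ?thesis using go.hyps by simp
  next
    case go then show ?thesis using \<open>\<And>h2. runs_to S \<sigma> (mstep S \<sigma> h) h2 \<Longrightarrow> h' = h2\<close> by simp
  qed
qed

lemma outcome_eq: "runs_to S \<sigma> h h' \<Longrightarrow> outcome S \<sigma> h a = snd (last (h' a))"
proof -
  assume r: "runs_to S \<sigma> h h'"
  have "(THE g. runs_to S \<sigma> h g) = h'"
    by (rule the_equality) (use r runs_det in blast)+
  then show ?thesis unfolding outcome_def by simp
qed

lemma runs_go: "\<not> (\<forall>i. S h i = {}) \<Longrightarrow> runs_to S \<sigma> h h' \<longleftrightarrow> runs_to S \<sigma> (mstep S \<sigma> h) h'"
proof
  assume "runs_to S \<sigma> h h'" "\<not> (\<forall>i. S h i = {})"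
  then show "runs_to S \<sigma> (mstep S \<sigma> h) h'" by (cases rule: runs_to.cases) simp_all
next
  assume "runs_to S \<sigma> (mstep S \<sigma> h) h'" "\<not> (\<forall>i. S h i = {})"
  then show "runs_to S \<sigma> h h'" by (rule runs_to.go[rotated])
qed

lemma runs_cong:
  assumes "runs_to S \<sigma> h h'" "I h"
    "\<And>g. I g \<Longrightarrow> \<not> (\<forall>i. S g i = {}) \<Longrightarrow> I (mstep S \<sigma> g) \<and> mstep S \<sigma>' g = mstep S \<sigma> g"
  shows "runs_to S \<sigma>' h h'"
  using assms(1,2)
proof (induction h h' rule: runs_to.induct)
  case (stop h) then show ?case by (simp add: runs_to.stop)
next
  case (go h h')
  then have "I (mstep S \<sigma> h)" "mstep S \<sigma>' h = mstep S \<sigma> h" using assms(3) by blast+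
  then show ?case using go runs_to.go[of S h \<sigma>'] by simp
qed

lemma runs_ext: "runs_to S \<sigma> h h' \<Longrightarrow> \<exists>e. h' i = h i @ e"
proof (induction h h' rule: runs_to.induct)
  case (stop h) then show ?case by simp
next
  case (go h h')
  obtain e1 where "mstep S \<sigma> h i = h i @ e1" using mstep_ext[of S \<sigma> h i] by blast
  then show ?case using go.IH by auto
qed

lemma runs_terminal: "runs_to S \<sigma> h h' \<Longrightarrow> \<forall>i. S h' i = {}"
  by (induction h h' rule: runs_to.induct) auto

locale pao_mech =
  fixes S :: "('a::finite, 'o::finite) menufun"
  assumes PAO: "is_PAO S"
begin

lemma reach_inv: "reachable S h \<Longrightarrow> (\<forall>i. okh (h i)) \<and> (h = empty_hist \<or> (\<forall>i. h i \<noteq> []))"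
proof (induction rule: reachable.induct)
  case start then show ?case by (simp add: empty_hist_def)
next
  case (step h c)
  let ?h = "\<lambda>i. if S h i = {} then h i else h i @ [(S h i, c i)]"
  have sub: "h i \<noteq> [] \<Longrightarrow> S h i \<subseteq> fst (last (h i)) - {snd (last (h i))}" for i
    using PAO step.hyps(1) unfolding is_PAO_def by blast
  have "okh (?h i)" for i
  proof (cases "S h i = {}")
    case True then show ?thesis using step.IH by simp
  next
    case False
    have "okh (h i @ [(S h i, c i)])"
      by (rule okh_snoc) (use step.IH step.hyps(3) sub False in auto)
    then show ?thesis using False by simp
  qed
  moreover have "?h = empty_hist \<or> (\<forall>i. ?h i \<noteq> [])"
  proof (cases "h = empty_hist")
    case True
    then have "S h i \<noteq> {}" for i using PAO unfolding is_PAO_def by simp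
    then show ?thesis by simp
  next
    case False then show ?thesis using step.IH by simp
  qed
  ultimately show ?case by blast
qed

lemma reach_okh: "reachable S h \<Longrightarrow> okh (h i)"
  using reach_inv by blast

lemma menu_sub: "reachable S h \<Longrightarrow> h i \<noteq> [] \<Longrightarrow> S h i \<subseteq> fst (last (h i)) - {snd (last (h i))}"
  using PAO unfolding is_PAO_def by blast

lemma menu_disj: "reachable S h \<Longrightarrow> S h i \<inter> set (chs (h i)) = {}"
proof (cases "h i = []")
  case True then show ?thesis by simp
next
  case False
  assume r: "reachable S h"
  show ?thesis using okh_last_menu_disj[OF reach_okh[OF r] False menu_sub[OF r False]] .
qed

lemma mstep_reach:
  "reachable S h \<Longrightarrow> \<not> (\<forall>i. S h i = {}) \<Longrightarrow> vstrat \<sigma> \<Longrightarrow> reachable S (mstep S \<sigma> h)"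
  unfolding mstep_def vstrat_def valid_strategy_def
  by (rule reachable.step[where c = "\<lambda>i. \<sigma> i (h i) (S h i)"]) auto

lemma meas_step:
  assumes r: "reachable S h" and ne: "\<not> (\<forall>i. S h i = {})"
  shows "meas (\<lambda>i. if S h i = {} then h i else h i @ [(S h i, c i)]) < meas h"
proof -
  let ?f = "\<lambda>g i. if g i = [] then Suc (card (UNIV::'o set)) else card (fst (last (g i)))"
  let ?h = "\<lambda>i. if S h i = {} then h i else h i @ [(S h i, c i)]"
  have lt: "?f ?h i < ?f h i" if "S h i \<noteq> {}" for i
  proof (cases "h i = []")
    case True
    have "card (S h i) \<le> card (UNIV::'o set)" by (rule card_mono) auto
    then show ?thesis using True that by simp
  next
    case False
    have sub: "S h i \<subseteq> fst (last (h i)) - {snd (last (h i))}" using menu_sub[OF r False] .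
    have "snd (last (h i)) \<in> fst (last (h i))"
      using okh_D1[OF reach_okh[OF r], of "length (h i) - 1" i] False by (simp add: last_conv_nth)
    then have "S h i \<subset> fst (last (h i))" using sub by blast
    then have "card (S h i) < card (fst (last (h i)))" by (rule psubset_card_mono[rotated]) simp
    then show ?thesis using False that by simp
  qed
  have le: "?f ?h i \<le> ?f h i" for i
    using lt[of i] by (cases "S h i = {}") auto
  obtain i where i: "S h i \<noteq> {}" using ne by blast
  have "sum (?f ?h) UNIV < sum (?f h) UNIV"
  proof (rule sum_strict_mono_ex1)
    show "\<forall>x\<in>UNIV. ?f ?h x \<le> ?f h x" using le by blast
    show "\<exists>a\<in>UNIV. ?f ?h a < ?f h a" using lt[OF i] by blast
  qed simp
  then show ?thesis unfolding meas_def by simp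
qed

lemma meas_mstep: "reachable S h \<Longrightarrow> \<not> (\<forall>i. S h i = {}) \<Longrightarrow> meas (mstep S \<sigma> h) < meas h"
  unfolding mstep_def by (rule meas_step)

lemma runs_exists: "reachable S h \<Longrightarrow> vstrat \<sigma> \<Longrightarrow> \<exists>h'. runs_to S \<sigma> h h'"
proof (induction "meas h" arbitrary: h rule: less_induct)
  case less
  show ?case
  proof (cases "\<forall>i. S h i = {}")
    case True then show ?thesis using runs_to.stop[where S=S and h=h and \<sigma>=\<sigma>, OF True] by blast
  next
    case False
    have "meas (mstep S \<sigma> h) < meas h" using meas_mstep[OF less.prems(1) False] .
    moreover have "reachable S (mstep S \<sigma> h)" using mstep_reach[OF less.prems(1) False less.prems(2)] .
    ultimately have "\<exists>h'. runs_to S \<sigma> (mstep S \<sigma> h) h'" using less.prems(2) by (intro less.hyps)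
    then obtain h' where "runs_to S \<sigma> (mstep S \<sigma> h) h'" by blast
    then show ?thesis using runs_to.go[where S=S and h=h and \<sigma>=\<sigma>, OF False] by blast
  qed
qed

lemma runs_reach: "runs_to S \<sigma> h h' \<Longrightarrow> reachable S h \<Longrightarrow> vstrat \<sigma> \<Longrightarrow> reachable S h'"
proof (induction h h' rule: runs_to.induct)
  case (stop h) then show ?case by simp
next
  case (go h h') then show ?case using mstep_reach[OF _ go.hyps(1)] by blast
qed

end

section \<open>Straightforward play and the rule\<close>

definition sfp :: "('a, 'o) profile \<Rightarrow> 'a \<Rightarrow> 'o strategy" where
  "sfp P = (\<lambda>b. straightforward (P b))"

definition cons_prof :: "('a, 'o) profile \<Rightarrow> ('a, 'o) chistA \<Rightarrow> bool" where
  "cons_prof P h \<longleftrightarrow> (\<forall>i. consistent (P i) (h i))"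

definition lastch :: "('a, 'o) chistA \<Rightarrow> 'a \<Rightarrow> 'o" where
  "lastch h = (\<lambda>i. snd (last (h i)))"

definition liftP :: "('a, 'o) chistA \<Rightarrow> ('a, 'o) profile \<Rightarrow> ('a, 'o) profile" where
  "liftP h P = (\<lambda>i. lft (chs (h i)) (P i))"

lemma vstrat_upd: "vstrat \<sigma> \<Longrightarrow> valid_strategy \<sigma>' \<Longrightarrow> vstrat (\<sigma>(a := \<sigma>'))"
  unfolding vstrat_def by simp

lemma vstrat_sf: "valid_profile (P :: ('a, 'o::finite) profile) \<Longrightarrow> vstrat (sfp P)"
  unfolding vstrat_def sfp_def valid_strategy_def straightforward_def valid_profile_def
  using best_in by blast

lemma valid_liftP: "valid_profile P \<Longrightarrow> valid_profile (liftP h P)"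
  unfolding valid_profile_def liftP_def using lft_strict by blast

lemma sfp_apply: "sfp P i g M = best (P i) M"
  by (simp add: sfp_def straightforward_def)

locale canon_mech = pao_mech S for S :: "('a::finite, 'o::finite) menufun" +
  fixes null :: 'o and \<phi> :: "('a, 'o) rule"
  assumes IR: "individually_rational null \<phi>"
    and RM: "resource_monotonic null \<phi>"
    and SP: "strategy_proof \<phi>"
    and MD: "monotonic_discoverability \<phi>"
    and canon: "S = canonical_menu \<phi>"
    and seq: "sequentializes S \<phi>"
begin

lemma F1_aux:
  assumes "reachable S h" "valid_profile P"
  shows "\<forall>h'. cons_prof P h \<longrightarrow> runs_to S (sfp P) h h' \<longrightarrow> runs_to S (sfp P) empty_hist h'"
  using assms(1)
proof (induction rule: reachable.induct)
  case start then show ?case by simp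
next
  case (step h c)
  let ?h2 = "\<lambda>i. if S h i = {} then h i else h i @ [(S h i, c i)]"
  show ?case
  proof (intro allI impI)
    fix h' assume C: "cons_prof P ?h2" and R: "runs_to S (sfp P) ?h2 h'"
    have Ch: "cons_prof P h" unfolding cons_prof_def
    proof
      fix i
      have "consistent (P i) (?h2 i)" using C unfolding cons_prof_def by blast
      then show "consistent (P i) (h i)" by (cases "S h i = {}") (simp_all add: consistent_append)
    qed
    have "c i = best (P i) (S h i)" if ne: "S h i \<noteq> {}" for i
    proof -
      have "consistent (P i) (?h2 i)" using C unfolding cons_prof_def by blast
      then have "consistent (P i) (h i @ [(S h i, c i)])" using ne by simp
      then have "\<forall>y\<in>S h i. weak (P i) (c i) y" by (simp add: consistent_append consistent_def)
      moreover have "c i \<in> S h i" using step.hyps(3) ne by blast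
      ultimately show ?thesis using best_weak_eq assms(2) unfolding valid_profile_def by metis
    qed
    then have "?h2 = mstep S (sfp P) h"
      unfolding mstep_def sfp_apply by (intro ext) auto
    then have "runs_to S (sfp P) h h'" using runs_to.go[where S=S and h=h and \<sigma>="sfp P", OF step.hyps(2)] R by simp
    then show "runs_to S (sfp P) empty_hist h'" using step.IH Ch by blast
  qed
qed

lemma T1:
  assumes "reachable S h" "valid_profile P" "cons_prof P h" "runs_to S (sfp P) h h'"
  shows "\<phi> P = lastch h'"
proof -
  have "runs_to S (sfp P) empty_hist h'" using F1_aux[OF assms(1,2)] assms(3,4) by blast
  then have "outcome S (sfp P) empty_hist a = snd (last (h' a))" for a by (rule outcome_eq)
  moreover have "outcome S (sfp P) empty_hist a = \<phi> P a" for a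
    using seq assms(2) unfolding sequentializes_def sfp_def by simp
  ultimately show ?thesis unfolding lastch_def by (intro ext) simp
qed

lemma T_terminal:
  assumes "reachable S h" "\<forall>i. S h i = {}" "valid_profile P" "cons_prof P h"
  shows "\<phi> P = lastch h"
  using T1[OF assms(1,3,4)] runs_to.stop[where S=S and h=h and \<sigma>="sfp P", OF assms(2)] by blast

lemma lift_runs:
  assumes "reachable S h" "valid_profile P" "runs_to S (sfp P) h h'"
  shows "runs_to S (sfp (liftP h P)) h h'"
proof (rule runs_cong[OF assms(3), where I = "\<lambda>g. reachable S g \<and> (\<forall>i. \<exists>e. g i = h i @ e)"])
  show "reachable S h \<and> (\<forall>i. \<exists>e. h i = h i @ e)" using assms(1) by simp
next
  fix g assume I: "reachable S g \<and> (\<forall>i. \<exists>e. g i = h i @ e)" and ne: "\<not> (\<forall>i. S g i = {})"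
  have rg: "reachable S g" using I by blast
  have "reachable S (mstep S (sfp P) g)" using mstep_reach[OF rg ne vstrat_sf[OF assms(2)]] .
  moreover have "\<forall>i. \<exists>e. mstep S (sfp P) g i = h i @ e"
  proof
    fix i
    obtain e1 where "g i = h i @ e1" using I by blast
    moreover obtain e2 where "mstep S (sfp P) g i = g i @ e2" using mstep_ext[of S "sfp P" g i] by blast
    ultimately show "\<exists>e. mstep S (sfp P) g i = h i @ e" by simp
  qed
  moreover have "mstep S (sfp (liftP h P)) g = mstep S (sfp P) g"
  proof (rule mstep_cong)
    fix i assume ne: "S g i \<noteq> {}"
    have d: "S g i \<inter> set (chs (g i)) = {}" using menu_disj[OF rg] .
    obtain e1 where "g i = h i @ e1" using I by blast
    then have "S g i \<inter> set (chs (h i)) = {}" using d by auto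
    then have eqo: "\<forall>x\<in>S g i. \<forall>y\<in>S g i. lft (chs (h i)) (P i) x y = P i x y"
      using lft_out by (metis disjoint_iff)
    have sp: "strict_pref (P i)" using assms(2) unfolding valid_profile_def by blast
    have "best (lft (chs (h i)) (P i)) (S g i) = best (P i) (S g i)"
      by (rule best_cong[OF lft_strict[OF sp] sp ne eqo])
    then show "sfp (liftP h P) i (g i) (S g i) = sfp P i (g i) (S g i)"
      unfolding sfp_apply liftP_def by simp
  qed
  ultimately show "(reachable S (mstep S (sfp P) g) \<and> (\<forall>i. \<exists>e. mstep S (sfp P) g i = h i @ e))
     \<and> mstep S (sfp (liftP h P)) g = mstep S (sfp P) g" by blast
qed

lemma liftP_cons: "reachable S h \<Longrightarrow> cons_prof (liftP h P) h"
  unfolding cons_prof_def liftP_def using okh_consistent reach_okh by blast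

lemma L_outcome:
  assumes "reachable S h" "valid_profile P" "runs_to S (sfp P) h h'"
  shows "\<phi> (liftP h P) = lastch h'"
  using T1[OF assms(1) valid_liftP[OF assms(2)] liftP_cons[OF assms(1)] lift_runs[OF assms]] .

lemma L_outcome2:
  assumes "reachable S h" "valid_profile P"
  shows "outcome S (sfp P) h = \<phi> (liftP h P)"
proof -
  obtain h' where r: "runs_to S (sfp P) h h'" using runs_exists[OF assms(1) vstrat_sf[OF assms(2)]] by blast
  show ?thesis using L_outcome[OF assms r] outcome_eq[OF r] unfolding lastch_def by (intro ext) simp
qed

lemma phi_liftP:
  assumes "reachable S h" "valid_profile P" "cons_prof P h"
  shows "\<phi> (liftP h P) = \<phi> P"
proof -
  obtain h' where r: "runs_to S (sfp P) h h'" using runs_exists[OF assms(1) vstrat_sf[OF assms(2)]] by blast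
  show ?thesis using L_outcome[OF assms(1,2) r] T1[OF assms r] by simp
qed

lemma menu_mu: "S h i \<noteq> {} \<Longrightarrow> S h i = mu_hist \<phi> h i"
  using canon unfolding canonical_menu_def by (auto split: if_splits)

lemma mover_out:
  assumes "S h i \<noteq> {}" "valid_profile P" "cons_prof P h"
  shows "\<phi> P i \<in> S h i"
proof -
  have "P \<in> consistent_profiles h" using assms(2,3) unfolding consistent_profiles_def cons_prof_def by blast
  then have "\<phi> P \<in> rule_hist \<phi> h" unfolding rule_hist_def by blast
  then show ?thesis unfolding menu_mu[OF assms(1)] mu_hist_def by blast
qed

lemma out_last_menu:
  assumes "reachable S h" "h i \<noteq> []" "valid_profile P" "cons_prof P h"
  shows "\<phi> P i \<in> fst (last (h i))"
proof -
  obtain h' where r: "runs_to S (sfp P) h h'" using runs_exists[OF assms(1) vstrat_sf[OF assms(3)]] by blast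
  have ph: "\<phi> P i = snd (last (h' i))" using T1[OF assms(1,3,4) r] unfolding lastch_def by simp
  have rh: "reachable S h'" using runs_reach[OF r assms(1) vstrat_sf[OF assms(3)]] .
  have ok: "okh (h' i)" using reach_okh[OF rh] .
  obtain e where e: "h' i = h i @ e" using runs_ext[OF r] by blast
  let ?n = "length (h i)" and ?m = "length (h' i)"
  have L1: "last (h i) = h i ! (?n - 1)" using assms(2) by (rule last_conv_nth)
  have "h' i \<noteq> []" using assms(2) e by simp
  then have L2: "last (h' i) = h' i ! (?m - 1)" by (rule last_conv_nth)
  have m: "?m - 1 < ?m" using assms(2) e by simp
  have in1: "snd (last (h' i)) \<in> fst (last (h' i))" unfolding L2 by (rule okh_D1[OF ok m])
  show ?thesis
  proof (cases "e = []")
    case True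
    then have "h' i = h i" using e by simp
    then show ?thesis using in1 unfolding ph by simp
  next
    case False
    have "?n > 0" using assms(2) by simp
    moreover have "?m > ?n" using e False by simp
    ultimately have lt: "?n - 1 < ?m - 1" by linarith
    have n1: "?n - 1 < ?n" using \<open>?n > 0\<close> by simp
    have A: "h' i ! (?n - 1) = h i ! (?n - 1)" unfolding e using n1 by (simp only: nth_append if_True)
    have B: "fst (h' i ! (?m - 1)) \<subseteq> fst (h' i ! (?n - 1))" using okh_D2[OF ok lt m] by blast
    have "fst (last (h' i)) \<subseteq> fst (last (h i))" using B unfolding L1 L2 A .
    then show ?thesis using in1 unfolding ph by (rule subsetD)
  qed
qed

end

section \<open>Straightforward strategies form a perfect ex-post equilibrium\<close>

lemma runs_nomove:
  assumes "runs_to S \<sigma> h h'" "h' a = h a"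
  shows "runs_to S (\<sigma>(a := \<sigma>')) h h'"
  using assms
proof (induction h h' rule: runs_to.induct)
  case (stop h) then show ?case by (simp add: runs_to.stop)
next
  case (go h h')
  let ?g = "mstep S \<sigma> h"
  obtain e1 where e1: "?g a = h a @ e1" using mstep_ext[of S \<sigma> h a] by blast
  obtain e2 where e2: "h' a = ?g a @ e2" using runs_ext[OF go.hyps(2)] by blast
  have "e1 = []" using e1 e2 go.prems by simp
  then have ga: "?g a = h a" using e1 by simp
  then have "S h a = {}" unfolding mstep_def by (metis (mono_tags, lifting) append_self_conv list.distinct(1))
  then have "mstep S (\<sigma>(a := \<sigma>')) h = ?g" by (intro mstep_cong) auto
  moreover have "h' a = ?g a" using go.prems ga by simp
  then have "runs_to S (\<sigma>(a := \<sigma>')) ?g h'" by (rule go.IH)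
  ultimately have "runs_to S (\<sigma>(a := \<sigma>')) (mstep S (\<sigma>(a := \<sigma>')) h) h'" by (simp only:)
  then show ?case by (rule runs_to.go[where S=S and h=h, OF go.hyps(1)])
qed

lemma last_notin:
  assumes "okh (h @ e)" "e \<noteq> []"
  shows "snd (last (h @ e)) \<notin> set (chs h)"
proof
  assume "snd (last (h @ e)) \<in> set (chs h)"
  then obtain k where k: "k < length h" "snd (h ! k) = snd (last (h @ e))" by (auto simp: in_set_conv_nth)
  let ?m = "length (h @ e)"
  have L: "last (h @ e) = (h @ e) ! (?m - 1)" using assms(2) by (simp add: last_conv_nth)
  have km: "k < ?m - 1" using k assms(2) by (cases e) auto
  have m: "?m - 1 < ?m" using assms(2) by simp
  have "snd ((h @ e) ! k) \<notin> fst ((h @ e) ! (?m - 1))" using okh_D2[OF assms(1) km m] by blast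
  moreover have "snd ((h @ e) ! (?m - 1)) \<in> fst ((h @ e) ! (?m - 1))" using okh_D1[OF assms(1) m] .
  moreover have "(h @ e) ! k = h ! k" using k by (simp add: nth_append)
  ultimately show False using k(2) unfolding L by simp
qed

context pao_mech
begin

lemma runs_cons:
  assumes "runs_to S \<sigma> h h'" "reachable S h" "vstrat \<sigma>" "\<exists>e. h b = hbase b @ e" "consistent q (h b)"
    "\<And>g. reachable S g \<Longrightarrow> \<exists>e. g b = hbase b @ e \<Longrightarrow> S g b \<noteq> {} \<Longrightarrow> \<forall>y\<in>S g b. weak q (\<sigma> b (g b) (S g b)) y"
  shows "consistent q (h' b)"
  using assms(1-5)
proof (induction h h' rule: runs_to.induct)
  case (stop h) then show ?case by simp
next
  case (go h h')
  let ?g = "mstep S \<sigma> h"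
  have rg: "reachable S ?g" using mstep_reach[OF go.prems(1) go.hyps(1) go.prems(2)] .
  have eg: "\<exists>e. ?g b = hbase b @ e"
  proof -
    obtain e1 where "?g b = h b @ e1" using mstep_ext[of S \<sigma> h b] by blast
    moreover obtain e2 where "h b = hbase b @ e2" using go.prems(3) by blast
    ultimately show ?thesis by simp
  qed
  have cg: "consistent q (?g b)"
  proof (cases "S h b = {}")
    case True then show ?thesis using go.prems(4) unfolding mstep_def by simp
  next
    case False
    have "\<forall>y\<in>S h b. weak q (\<sigma> b (h b) (S h b)) y" using assms(6)[OF go.prems(1) go.prems(3) False] .
    then show ?thesis using go.prems(4) False unfolding mstep_def by (simp add: consistent_append consistent_def)
  qed
  show ?case using go.IH[OF rg go.prems(2) eg cg] .
qed

end

context canon_mech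
begin

lemma sf_outcome_dev:
  assumes r: "reachable S hA" and vP: "valid_profile P" and vs: "valid_strategy \<sigma>'"
  shows "weak (P a) (outcome S (sfp P) hA a) (outcome S ((sfp P)(a := \<sigma>')) hA a)"
proof -
  let ?\<sigma>2 = "(sfp P)(a := \<sigma>')"
  have v1: "vstrat (sfp P)" using vstrat_sf[OF vP] .
  have v2: "vstrat ?\<sigma>2" using v1 vs unfolding vstrat_def by simp
  obtain h1 where r1: "runs_to S (sfp P) hA h1" using runs_exists[OF r v1] by blast
  obtain h2 where r2: "runs_to S ?\<sigma>2 hA h2" using runs_exists[OF r v2] by blast
  have o1: "outcome S (sfp P) hA a = snd (last (h1 a))" using outcome_eq[OF r1] .
  have o2: "outcome S ?\<sigma>2 hA a = snd (last (h2 a))" using outcome_eq[OF r2] .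
  let ?Q = "liftP hA P"
  have vQ: "valid_profile ?Q" using valid_liftP[OF vP] .
  have phiQ: "\<phi> ?Q = lastch h1" using L_outcome[OF r vP r1] .
  let ?q = "lft (chs (h2 a)) (P a)"
  let ?Q2 = "?Q(a := ?q)"
  have spa: "strict_pref (P a)" using vP unfolding valid_profile_def by blast
  have vQ2: "valid_profile ?Q2" using vQ lft_strict[OF spa] unfolding valid_profile_def by simp
  have rh2: "reachable S h2" using runs_reach[OF r2 r v2] .
  have cQ2: "cons_prof ?Q2 h2" unfolding cons_prof_def
  proof
    fix b show "consistent (?Q2 b) (h2 b)"
    proof (cases "b = a")
      case True then show ?thesis using okh_consistent[OF reach_okh[OF rh2]] by simp
    next
      case False
      have spb: "strict_pref (P b)" using vP unfolding valid_profile_def by blast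
      have "consistent (lft (chs (hA b)) (P b)) (h2 b)"
      proof (rule runs_cons[OF r2 r v2, where hbase = hA])
        show "\<exists>e. hA b = hA b @ e" by simp
        show "consistent (lft (chs (hA b)) (P b)) (hA b)" using okh_consistent[OF reach_okh[OF r]] .
      next
        fix g assume rg: "reachable S g" and eg: "\<exists>e. g b = hA b @ e" and ne: "S g b \<noteq> {}"
        have d: "S g b \<inter> set (chs (g b)) = {}" using menu_disj[OF rg] .
        obtain e1 where "g b = hA b @ e1" using eg by blast
        then have "S g b \<inter> set (chs (hA b)) = {}" using d by auto
        then have eqo: "\<forall>x\<in>S g b. \<forall>y\<in>S g b. lft (chs (hA b)) (P b) x y = P b x y"
          using lft_out by (metis disjoint_iff)
        have "best (P b) (S g b) = best (lft (chs (hA b)) (P b)) (S g b)"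
          by (rule best_cong[OF spb lft_strict[OF spb] ne]) (use eqo in simp)
        then have "?\<sigma>2 b (g b) (S g b) = best (lft (chs (hA b)) (P b)) (S g b)"
          using False by (simp add: sfp_apply)
        then show "\<forall>y\<in>S g b. weak (lft (chs (hA b)) (P b)) (?\<sigma>2 b (g b) (S g b)) y"
          using best_weak[OF lft_strict[OF spb] ne] by simp
      qed
      then show ?thesis using False unfolding liftP_def by simp
    qed
  qed
  have phiQ2: "\<phi> ?Q2 = lastch h2" using T_terminal[OF rh2 runs_terminal[OF r2] vQ2 cQ2] .
  have "weak (?Q a) (\<phi> ?Q a) (\<phi> (?Q(a := ?q)) a)"
    using SP vQ lft_strict[OF spa] unfolding strategy_proof_def by blast
  then have W: "weak (lft (chs (hA a)) (P a)) (snd (last (h1 a))) (snd (last (h2 a)))"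
    using phiQ phiQ2 unfolding lastch_def liftP_def by simp
  show ?thesis
  proof (cases "h1 a = hA a \<or> h2 a = hA a")
    case True
    have "h1 = h2"
    proof (cases "h1 a = hA a")
      case True
      then have "runs_to S ?\<sigma>2 hA h1" using runs_nomove[OF r1] by blast
      then show ?thesis using runs_det r2 by blast
    next
      case False
      then have h2a: "h2 a = hA a" using \<open>h1 a = hA a \<or> h2 a = hA a\<close> by blast
      have "runs_to S (?\<sigma>2(a := sfp P a)) hA h2" using runs_nomove[OF r2 h2a] by blast
      then have "runs_to S (sfp P) hA h2" by simp
      then show ?thesis using runs_det r1 by blast
    qed
    then show ?thesis using o1 o2 by simp
  next
    case False
    obtain e1 where e1: "h1 a = hA a @ e1" using runs_ext[OF r1] by blast
    obtain e2 where e2: "h2 a = hA a @ e2" using runs_ext[OF r2] by blast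
    have rh1: "reachable S h1" using runs_reach[OF r1 r v1] .
    have n1: "snd (last (h1 a)) \<notin> set (chs (hA a))"
      using last_notin[of "hA a" e1] reach_okh[OF rh1, of a] e1 False by auto
    have n2: "snd (last (h2 a)) \<notin> set (chs (hA a))"
      using last_notin[of "hA a" e2] reach_okh[OF rh2, of a] e2 False by auto
    have "weak (P a) (snd (last (h1 a))) (snd (last (h2 a)))"
      using W lft_out[OF n1 n2] unfolding weak_def by simp
    then show ?thesis using o1 o2 by simp
  qed
qed

lemma sf_pepe: "perfect_ex_post_eq S (\<lambda>a. straightforward)"
  unfolding perfect_ex_post_eq_def using sf_outcome_dev[unfolded sfp_def] by blast

end

section \<open>A fixed null-top preference\<close>

lemma tp_irr_trans:
  "(\<forall>x. \<not> T x x) \<and> (\<forall>x y z. T x y \<longrightarrow> T y z \<longrightarrow> T x z) \<Longrightarrow>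
   (\<forall>x. \<not> tp c T x x) \<and> (\<forall>x y z. tp c T x y \<longrightarrow> tp c T y z \<longrightarrow> tp c T x z)"
  unfolding tp_def by blast

lemma lft_irr_trans:
  "(\<forall>x. \<not> T x x) \<and> (\<forall>x y z. T x y \<longrightarrow> T y z \<longrightarrow> T x z) \<Longrightarrow>
   (\<forall>x. \<not> lft L T x x) \<and> (\<forall>x y z. lft L T x y \<longrightarrow> lft L T y z \<longrightarrow> lft L T x z)"
proof (induction L)
  case Nil then show ?case by simp
next
  case (Cons c L) then show ?case using tp_irr_trans[of "lft L T" c] by simp
qed

lemma lft_tot: "x \<in> set L \<Longrightarrow> y \<in> set L \<Longrightarrow> x \<noteq> y \<Longrightarrow> lft L T x y \<or> lft L T y x"
proof (induction L)
  case Nil then show ?case by simp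
next
  case (Cons c L)
  show ?case
  proof (cases "x = c \<or> y = c")
    case True then show ?thesis using Cons.prems(3) by (auto simp: tp_def)
  next
    case False
    then have "lft L T x y \<or> lft L T y x" using Cons by simp
    then show ?thesis using False by (auto simp: tp_def)
  qed
qed

lemma exists_strict: "\<exists>p::'o::finite pref. strict_pref p"
proof -
  obtain xs :: "'o list" where xs: "set xs = UNIV" using finite_list[OF finite_UNIV] by blast
  let ?p = "lft xs (\<lambda>_ _. False)"
  have "(\<forall>x. \<not> ?p x x) \<and> (\<forall>x y z. ?p x y \<longrightarrow> ?p y z \<longrightarrow> ?p x z)"
    by (rule lft_irr_trans) simp
  moreover have "\<forall>x y. x \<noteq> y \<longrightarrow> ?p x y \<or> ?p y x"
  proof (intro allI impI)
    fix x y :: 'o assume "x \<noteq> y"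
    moreover have "x \<in> set xs" "y \<in> set xs" using xs by auto
    ultimately show "?p x y \<or> ?p y x" using lft_tot by metis
  qed
  ultimately have "strict_pref ?p" unfolding strict_pref_def by blast
  then show ?thesis by blast
qed

definition T0 :: "'o::finite pref" where "T0 = (SOME p. strict_pref p)"

lemma T0_strict: "strict_pref T0"
  unfolding T0_def by (rule someI_ex[OF exists_strict])

definition N0 :: "'o::finite \<Rightarrow> 'o pref" where "N0 n = tp n T0"

lemma N0_strict: "strict_pref (N0 n)"
  unfolding N0_def by (rule tp_strict[OF T0_strict])

lemma N0_not_below: "\<not> N0 n v n"
  unfolding N0_def tp_def by simp

lemma N0_top: "v \<noteq> n \<Longrightarrow> N0 n n v"
  unfolding N0_def tp_def by simp

lemma tp_N0: "tp n (N0 n) = N0 n"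
  unfolding N0_def by (rule tp_idem)

lemma weak_N0: 
  assumes "weak (N0 n) v n" shows "v = n"
proof (rule ccontr)
  assume "v \<noteq> n"
  then have "N0 n v n" using assms unfolding weak_def by simp
  then show False using N0_not_below by metis
qed

lemma lft_N0_null:
  assumes "weak (lft L (N0 n)) v n" shows "v = n \<or> v \<in> set L"
proof (cases "v = n")
  case False
  then have "lft L (N0 n) v n" using assms unfolding weak_def by simp
  then have "v \<in> set L \<or> N0 n v n" using lft_cases by metis
  then show ?thesis using N0_not_below by metis
qed simp

lemma tp_below: "weak (tp c p) w c \<Longrightarrow> w = c"
  unfolding weak_def tp_def by blast

lemma okh_last_unique:
  assumes "okh h" "h \<noteq> []" "v \<in> set (chs h)" "v \<in> fst (last h)"
  shows "v = snd (last h)"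
proof -
  obtain k where k: "k < length h" "snd (h!k) = v" using assms(3) by (auto simp: in_set_conv_nth)
  have L: "last h = h ! (length h - 1)" using assms(2) by (rule last_conv_nth)
  have m: "length h - 1 < length h" using assms(2) by simp
  show ?thesis
  proof (cases "k = length h - 1")
    case True then show ?thesis using k L by simp
  next
    case False
    then have "k < length h - 1" using k by simp
    then have "snd (h!k) \<notin> fst (h ! (length h - 1))" using okh_D2[OF assms(1) _ m] by blast
    then show ?thesis using k assms(4) L by simp
  qed
qed

definition ovr :: "('a, 'o) profile \<Rightarrow> 'a set \<Rightarrow> 'o pref \<Rightarrow> ('a, 'o) profile" where
  "ovr Y F q = (\<lambda>i. if i \<in> F then q else Y i)"

lemma ovr_empty[simp]: "ovr Y {} q = Y" unfolding ovr_def by simp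
lemma ovr_insert: "ovr Y (insert j F) q = (ovr Y F q)(j := q)" unfolding ovr_def by (intro ext) auto
lemma valid_ovr: "valid_profile Y \<Longrightarrow> strict_pref q \<Longrightarrow> valid_profile (ovr Y F q)"
  unfolding valid_profile_def ovr_def by simp
lemma valid_upd: "valid_profile Y \<Longrightarrow> strict_pref q \<Longrightarrow> valid_profile (Y(j := q))"
  unfolding valid_profile_def by simp

lemma liftP_upd: "liftP h (Y(j := q)) = (liftP h Y)(j := lft (chs (h j)) q)"
  unfolding liftP_def by (intro ext) simp

context canon_mech
begin

abbreviation "Nn \<equiv> N0 null"

lemma IR_app: "valid_profile P \<Longrightarrow> weak (P a) (\<phi> P a) null"
  using IR unfolding individually_rational_def by blast

lemma SP_app: "valid_profile P \<Longrightarrow> strict_pref p' \<Longrightarrow> weak (P a) (\<phi> P a) (\<phi> (P(a := p')) a)"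
  using SP unfolding strategy_proof_def by blast

lemma RM_app: "valid_profile P \<Longrightarrow> strict_pref p' \<Longrightarrow> \<phi> (P(j := p')) j = null \<Longrightarrow> i \<noteq> j \<Longrightarrow>
   weak (P i) (\<phi> (P(j := p')) i) (\<phi> P i)"
  using RM unfolding resource_monotonic_def by blast

lemma null_out:
  fixes j :: 'a
  assumes r: "reachable S hA" and vY: "valid_profile Y"
  defines "v \<equiv> \<phi> (liftP hA (Y(j := Nn))) j"
  shows "v = null \<or> (hA j \<noteq> [] \<and> v = snd (last (hA j)))"
proof -
  let ?X = "liftP hA (Y(j := Nn))"
  have vX: "valid_profile ?X" using valid_liftP[OF valid_upd[OF vY N0_strict]] .
  have "weak (?X j) v null" using IR_app[OF vX] unfolding v_def .
  then have "weak (lft (chs (hA j)) Nn) v null" unfolding liftP_def by simp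
  then have c: "v = null \<or> v \<in> set (chs (hA j))" using lft_N0_null by blast
  show ?thesis
  proof (cases "v = null")
    case True then show ?thesis by simp
  next
    case False
    then have vin: "v \<in> set (chs (hA j))" using c by blast
    then have ne: "hA j \<noteq> []" by auto
    have "v \<in> fst (last (hA j))" using out_last_menu[OF r ne vX liftP_cons[OF r]] unfolding v_def .
    then have "v = snd (last (hA j))" using okh_last_unique[OF reach_okh[OF r] ne vin] by simp
    then show ?thesis using ne by simp
  qed
qed

lemma single_step:
  assumes r: "reachable S hA" and vY: "valid_profile Y" and ij: "i \<noteq> j"
  shows "weak (liftP hA Y i) (\<phi> (liftP hA (Y(j := Nn))) i) (\<phi> (liftP hA Y) i)"
proof -
  let ?X = "liftP hA Y" and ?X' = "liftP hA (Y(j := Nn))"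
  let ?Z = "lft (chs (hA j)) Nn"
  have X': "?X' = ?X(j := ?Z)" by (rule liftP_upd)
  have vX: "valid_profile ?X" using valid_liftP[OF vY] .
  have spZ: "strict_pref ?Z" using lft_strict N0_strict by blast
  have vX': "valid_profile ?X'" using vX spZ X' unfolding valid_profile_def by simp
  from null_out[OF r vY, of j]
  show ?thesis
  proof
    assume "\<phi> ?X' j = null"
    then have "\<phi> (?X(j := ?Z)) j = null" using X' by simp
    then show ?thesis using RM_app[OF vX spZ _ ij] X' by simp
  next
    assume "hA j \<noteq> [] \<and> \<phi> ?X' j = snd (last (hA j))"
    then have ne: "hA j \<noteq> []" and v: "\<phi> ?X' j = snd (last (hA j))" by auto
    let ?\<omega> = "snd (last (hA j))"
    let ?\<mu> = "\<phi> ?X'"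
    have spXj: "strict_pref (?X j)" using vX unfolding valid_profile_def by blast
    have u_in: "\<phi> ?X j \<in> fst (last (hA j))" using out_last_menu[OF r ne vX liftP_cons[OF r]] .
    have "consistent (?X j) (hA j)" using liftP_cons[OF r] unfolding cons_prof_def by blast
    moreover have "last (hA j) \<in> set (hA j)" using ne by simp
    ultimately have w1: "weak (?X j) ?\<omega> (\<phi> ?X j)" using u_in unfolding consistent_def
      by (metis (no_types, lifting) case_prod_beta)
    have w2: "weak (?X j) (\<phi> ?X j) ?\<omega>" using SP_app[OF vX spZ, of j] X' v by simp
    have u: "\<phi> ?X j = ?\<omega>" using weak_antisym[OF spXj w2 w1] .
    have \<omega>in: "?\<omega> \<in> set (chs (hA j))" using ne by simp
    have eq: "\<phi> ?X = ?\<mu>"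
    proof (rule ccontr)
      assume neq: "\<phi> ?X \<noteq> ?\<mu>"
      then obtain astar where A: "\<forall>P'\<in>Lset ?X ?\<mu>. \<phi> P' astar \<noteq> ?\<mu> astar"
        using MD vX unfolding monotonic_discoverability_def by blast
      have "?X' \<in> Lset ?X ?\<mu>"
        unfolding Lset_def
      proof (intro CollectI conjI allI ballI)
        show "valid_profile ?X'" using vX' .
      next
        fix b
        show "upper (?X' b) (?\<mu> b) = upper (?X b) (?\<mu> b)"
        proof (cases "b = j")
          case True
          have "lft (chs (hA j)) Nn x ?\<omega> = lft (chs (hA j)) (Y j) x ?\<omega>" for x
            using lft_in \<omega>in by metis
          then show ?thesis using True v X' unfolding upper_def weak_def liftP_def by simp
        next
          case False then show ?thesis using X' by simp
        qed
      next
        fix b x y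
        assume x: "x \<in> upper (?X b) (?\<mu> b)" and y: "y \<in> upper (?X b) (?\<mu> b)"
        show "?X' b x y = ?X b x y"
        proof (cases "b = j")
          case True
          have "x = ?\<omega> \<or> lft (chs (hA j)) (Y j) x ?\<omega>" using x True v unfolding upper_def weak_def liftP_def by simp
          then have "x \<in> set (chs (hA j))" using \<omega>in lft_cases by metis
          then have "lft (chs (hA j)) Nn x y = lft (chs (hA j)) (Y j) x y" using lft_in by metis
          then show ?thesis using True X' unfolding liftP_def by simp
        next
          case False then show ?thesis using X' by simp
        qed
      qed
      then show False using A by blast
    qed
    then show ?thesis by simp
  qed
qed

lemma chain:
  assumes r: "reachable S hA" and vY: "valid_profile Y" and fin: "finite F"
  shows "\<forall>i. i \<notin> F \<longrightarrow> weak (liftP hA Y i) (\<phi> (liftP hA (ovr Y F Nn)) i) (\<phi> (liftP hA Y) i)"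
  using fin
proof (induction F rule: finite_induct)
  case empty then show ?case by simp
next
  case (insert j F)
  show ?case
  proof (intro allI impI)
    fix i assume i: "i \<notin> insert j F"
    let ?Y1 = "ovr Y F Nn"
    have vY1: "valid_profile ?Y1" using valid_ovr[OF vY N0_strict] .
    have "weak (liftP hA ?Y1 i) (\<phi> (liftP hA (?Y1(j := Nn))) i) (\<phi> (liftP hA ?Y1) i)"
      using single_step[OF r vY1] i by blast
    moreover have "liftP hA ?Y1 i = liftP hA Y i" using i unfolding liftP_def ovr_def by simp
    moreover have "weak (liftP hA Y i) (\<phi> (liftP hA ?Y1) i) (\<phi> (liftP hA Y) i)" using insert.IH i by blast
    moreover have "strict_pref (liftP hA Y i)" using valid_liftP[OF vY] unfolding valid_profile_def by blast
    ultimately show "weak (liftP hA Y i) (\<phi> (liftP hA (ovr Y (insert j F) Nn)) i) (\<phi> (liftP hA Y) i)"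
      unfolding ovr_insert using weak_trans by metis
  qed
qed

lemma mover_null:
  assumes r: "reachable S hA" and vY: "valid_profile Y" and mv: "S hA j \<noteq> {}"
  shows "\<phi> (liftP hA (Y(j := Nn))) j = null"
proof -
  let ?X = "liftP hA (Y(j := Nn))"
  have vX: "valid_profile ?X" using valid_liftP[OF valid_upd[OF vY N0_strict]] .
  have o: "\<phi> ?X j \<in> S hA j" using mover_out[OF mv vX liftP_cons[OF r]] .
  have d: "S hA j \<inter> set (chs (hA j)) = {}" using menu_disj[OF r] .
  from null_out[OF r vY, of j]
  show ?thesis
  proof
    assume "hA j \<noteq> [] \<and> \<phi> ?X j = snd (last (hA j))"
    then have "\<phi> ?X j \<in> set (chs (hA j))" by simp
    then show ?thesis using o d by (simp add: disjoint_iff)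
  qed
qed

lemma swap:
  assumes r: "reachable S hA" and vY: "valid_profile Y" and mv: "S hA j \<noteq> {}"
    and n: "\<phi> (liftP hA Y) j = null"
  shows "\<phi> (liftP hA (Y(j := Nn))) = \<phi> (liftP hA Y)"
proof
  fix i
  let ?X = "liftP hA Y" and ?X' = "liftP hA (Y(j := Nn))"
  let ?Z = "lft (chs (hA j)) Nn"
  have X': "?X' = ?X(j := ?Z)" by (rule liftP_upd)
  have vX: "valid_profile ?X" using valid_liftP[OF vY] .
  have spZ: "strict_pref ?Z" using lft_strict N0_strict by blast
  have vX': "valid_profile ?X'" using vX spZ X' unfolding valid_profile_def by simp
  have n': "\<phi> ?X' j = null" using mover_null[OF r vY mv] .
  show "\<phi> ?X' i = \<phi> ?X i"
  proof (cases "i = j")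
    case True then show ?thesis using n n' by simp
  next
    case False
    have w1: "weak (?X i) (\<phi> ?X' i) (\<phi> ?X i)" using single_step[OF r vY False] unfolding liftP_def by simp
    have spXj: "strict_pref (?X j)" using vX unfolding valid_profile_def by blast
    have "?X'(j := ?X j) = ?X" using X' by (intro ext) simp
    then have w2: "weak (?X' i) (\<phi> ?X i) (\<phi> ?X' i)"
      using RM_app[OF vX' spXj _ False] n by simp
    have "?X' i = ?X i" using X' False by simp
    moreover have "strict_pref (?X i)" using vX unfolding valid_profile_def by blast
    ultimately show ?thesis using weak_antisym w1 w2 by metis
  qed
qed

lemma swap_chain:
  assumes r: "reachable S hA" and vY: "valid_profile Y" and fin: "finite F"
    and mv: "\<forall>j\<in>F. S hA j \<noteq> {}" and n: "\<forall>j\<in>F. \<phi> (liftP hA Y) j = null"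
  shows "\<phi> (liftP hA (ovr Y F Nn)) = \<phi> (liftP hA Y)"
  using fin mv n
proof (induction F rule: finite_induct)
  case empty then show ?case by simp
next
  case (insert j F)
  let ?Y1 = "ovr Y F Nn"
  have vY1: "valid_profile ?Y1" using valid_ovr[OF vY N0_strict] .
  have e1: "\<phi> (liftP hA ?Y1) = \<phi> (liftP hA Y)" using insert by blast
  have "\<phi> (liftP hA ?Y1) j = null" using e1 insert.prems(2) by simp
  then have "\<phi> (liftP hA (?Y1(j := Nn))) = \<phi> (liftP hA ?Y1)"
    using swap[OF r vY1] insert.prems(1) by blast
  then show ?case unfolding ovr_insert using e1 by (rule trans)
qed

lemma lift_get:
  assumes r: "reachable S hA" and mv: "S hA t \<noteq> {}" and c: "c \<in> S hA t" and sp: "strict_pref p"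
  shows "\<phi> (liftP hA (\<lambda>i. if i = t then tp c p else Nn)) t = c"
proof -
  have "c \<in> mu_hist \<phi> hA t" using c menu_mu[OF mv] by simp
  then obtain R where R: "R \<in> consistent_profiles hA" "\<phi> R t = c"
    unfolding mu_hist_def rule_hist_def by blast
  have vR: "valid_profile R" and cR: "cons_prof R hA"
    using R(1) unfolding consistent_profiles_def cons_prof_def by auto
  have eR: "\<phi> (liftP hA R) t = c" using phi_liftP[OF r vR cR] R(2) by simp
  let ?Y = "R(t := tp c p)"
  have spc: "strict_pref (tp c p)" using tp_strict[OF sp] .
  have vY: "valid_profile ?Y" using vR spc unfolding valid_profile_def by simp
  have spR: "strict_pref (liftP hA R t)" using valid_liftP[OF vR] unfolding valid_profile_def by blast
  have upd: "(liftP hA ?Y)(t := liftP hA R t) = liftP hA R" unfolding liftP_def by (intro ext) simp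
  have "weak (liftP hA ?Y t) (\<phi> (liftP hA ?Y) t) (\<phi> ((liftP hA ?Y)(t := liftP hA R t)) t)"
    using SP_app[OF valid_liftP[OF vY] spR] .
  then have w0: "weak (lft (chs (hA t)) (tp c p)) (\<phi> (liftP hA ?Y) t) c"
    using upd eR unfolding liftP_def by simp
  let ?Y2 = "ovr ?Y (UNIV - {t}) Nn"
  have Y2: "?Y2 = (\<lambda>i. if i = t then tp c p else Nn)" unfolding ovr_def by (intro ext) simp
  have "weak (liftP hA ?Y t) (\<phi> (liftP hA ?Y2) t) (\<phi> (liftP hA ?Y) t)"
    using chain[OF r vY, of "UNIV - {t}"] by simp
  then have w1: "weak (lft (chs (hA t)) (tp c p)) (\<phi> (liftP hA ?Y2) t) (\<phi> (liftP hA ?Y) t)"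
    unfolding liftP_def by simp
  have w: "weak (lft (chs (hA t)) (tp c p)) (\<phi> (liftP hA ?Y2) t) c"
    using weak_trans[OF lft_strict[OF spc] w1 w0] .
  have vY2: "valid_profile ?Y2" using valid_ovr[OF vY N0_strict] .
  have win: "\<phi> (liftP hA ?Y2) t \<in> S hA t" using mover_out[OF mv valid_liftP[OF vY2] liftP_cons[OF r]] .
  have d: "S hA t \<inter> set (chs (hA t)) = {}" using menu_disj[OF r] .
  have n1: "\<phi> (liftP hA ?Y2) t \<notin> set (chs (hA t))" using win d by blast
  have n2: "c \<notin> set (chs (hA t))" using c d by blast
  have "weak (tp c p) (\<phi> (liftP hA ?Y2) t) c" using w lft_out[OF n1 n2] unfolding weak_def by simp
  then have "\<phi> (liftP hA ?Y2) t = c" by (rule tp_below)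
  then show ?thesis using Y2 by simp
qed

end

context canon_mech
begin

lemma liftP_mstep:
  "liftP (mstep S \<sigma> h) P = liftP h (\<lambda>i. if S h i = {} then P i else tp (\<sigma> i (h i) (S h i)) (P i))"
  unfolding liftP_def mstep_def by (intro ext) (simp add: lft_snoc)

lemma out_succ:
  assumes r: "reachable S hA" and ne: "\<not> (\<forall>i. S hA i = {})" and vs: "vstrat \<sigma>" and vP: "valid_profile P"
    and agree: "\<And>x i. reachable S x \<Longrightarrow> meas x < meas hA \<Longrightarrow> (\<forall>k. \<exists>e. x k = mstep S \<sigma> hA k @ e)
      \<Longrightarrow> S x i \<noteq> {} \<Longrightarrow> \<sigma> i (x i) (S x i) = best (P i) (S x i)"
  shows "outcome S \<sigma> hA = \<phi> (liftP (mstep S \<sigma> hA) P)"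
proof -
  let ?g = "mstep S \<sigma> hA"
  have rg: "reachable S ?g" using mstep_reach[OF r ne vs] .
  have mg: "meas ?g < meas hA" using meas_mstep[OF r ne] .
  obtain h' where r1: "runs_to S (sfp P) ?g h'" using runs_exists[OF rg vstrat_sf[OF vP]] by blast
  have r2: "runs_to S \<sigma> ?g h'"
  proof (rule runs_cong[OF r1, where I = "\<lambda>x. reachable S x \<and> meas x < meas hA \<and> (\<forall>k. \<exists>e. x k = ?g k @ e)"])
    show "reachable S ?g \<and> meas ?g < meas hA \<and> (\<forall>k. \<exists>e. ?g k = ?g k @ e)" using rg mg by simp
  next
    fix x assume I: "reachable S x \<and> meas x < meas hA \<and> (\<forall>k. \<exists>e. x k = ?g k @ e)"
      and nx: "\<not> (\<forall>i. S x i = {})"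
    have rx: "reachable S x" using I by blast
    have "reachable S (mstep S (sfp P) x)" using mstep_reach[OF rx nx vstrat_sf[OF vP]] .
    moreover have "meas (mstep S (sfp P) x) < meas hA" using meas_mstep[OF rx nx, of "sfp P"] I by linarith
    moreover have "\<forall>k. \<exists>e. mstep S (sfp P) x k = ?g k @ e"
    proof
      fix k
      obtain e1 where "x k = ?g k @ e1" using I by blast
      moreover obtain e2 where "mstep S (sfp P) x k = x k @ e2" using mstep_ext[of S "sfp P" x k] by blast
      ultimately show "\<exists>e. mstep S (sfp P) x k = ?g k @ e" by simp
    qed
    moreover have "mstep S \<sigma> x = mstep S (sfp P) x"
    proof (rule mstep_cong)
      fix i assume "S x i \<noteq> {}"
      then show "\<sigma> i (x i) (S x i) = sfp P i (x i) (S x i)" using agree I unfolding sfp_apply by blast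
    qed
    ultimately show "(reachable S (mstep S (sfp P) x) \<and> meas (mstep S (sfp P) x) < meas hA \<and>
        (\<forall>k. \<exists>e. mstep S (sfp P) x k = ?g k @ e)) \<and> mstep S \<sigma> x = mstep S (sfp P) x" by blast
  qed
  have r3: "runs_to S \<sigma> hA h'" using runs_to.go[where S=S and h=hA and \<sigma>=\<sigma>, OF ne r2] .
  show ?thesis using outcome_eq[OF r3] L_outcome[OF rg vP r1] unfolding lastch_def by (intro ext) simp
qed

end

locale uniq = canon_mech S null \<phi> for S :: "('a::finite, 'o::finite) menufun" and null \<phi> +
  fixes \<Sigma> :: "'a \<Rightarrow> 'o pref \<Rightarrow> 'o strategy"
  assumes v\<Sigma>: "valid_type_strategy \<Sigma>" and eq\<Sigma>: "perfect_ex_post_eq S \<Sigma>"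
begin

definition claim :: "('a, 'o) chistA \<Rightarrow> bool" where
  "claim h \<longleftrightarrow> (\<forall>b p. strict_pref p \<longrightarrow> S h b \<noteq> {} \<longrightarrow> \<Sigma> b p (h b) (S h b) = best p (S h b))"

lemma vstrat_sig: "valid_profile P \<Longrightarrow> vstrat (\<lambda>b. \<Sigma> b (P b))"
  using v\<Sigma> unfolding vstrat_def valid_type_strategy_def valid_profile_def by blast

lemma sig_in: "strict_pref p \<Longrightarrow> S h b \<noteq> {} \<Longrightarrow> \<Sigma> b p (h b) (S h b) \<in> S h b"
  using v\<Sigma> unfolding valid_type_strategy_def valid_strategy_def by blast

lemma PEPE_app: "reachable S hA \<Longrightarrow> valid_strategy \<sigma>' \<Longrightarrow> valid_profile P \<Longrightarrow>
   weak (P a) (outcome S (\<lambda>b. \<Sigma> b (P b)) hA a) (outcome S ((\<lambda>b. \<Sigma> b (P b))(a := \<sigma>')) hA a)"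
  using eq\<Sigma> unfolding perfect_ex_post_eq_def by blast

lemma valid_sf: "strict_pref (p :: 'o pref) \<Longrightarrow> valid_strategy (straightforward p)"
  unfolding valid_strategy_def straightforward_def using best_in by metis

lemma null_in_menu:
  assumes r: "reachable S hA" and mv: "S hA i \<noteq> {}"
  shows "null \<in> S hA i"
proof -
  let ?P0 = "\<lambda>_::'a. Nn"
  have v0: "valid_profile ?P0" unfolding valid_profile_def using N0_strict by blast
  have "\<phi> (liftP hA (?P0(i := Nn))) i = null" using mover_null[OF r v0 mv] .
  moreover have "\<phi> (liftP hA (?P0(i := Nn))) i \<in> S hA i"
    using mover_out[OF mv valid_liftP[OF valid_upd[OF v0 N0_strict]] liftP_cons[OF r]] .
  ultimately show ?thesis by simp
qed

lemma best_Nn: "null \<in> M \<Longrightarrow> best Nn M = null"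
  using best_char[OF N0_strict] N0_top by metis

lemma nc:
  assumes r: "reachable S hA" and IH: "\<And>g. reachable S g \<Longrightarrow> meas g < meas hA \<Longrightarrow> claim g"
    and mvb: "S hA b \<noteq> {}"
  shows "\<Sigma> b Nn (hA b) (S hA b) = null"
proof -
  have ne: "\<not> (\<forall>i. S hA i = {})" using mvb by blast
  let ?P0 = "\<lambda>_::'a. Nn"
  have v0: "valid_profile ?P0" unfolding valid_profile_def using N0_strict by blast
  let ?c = "\<lambda>i. \<Sigma> i Nn (hA i) (S hA i)"
  let ?Y1 = "\<lambda>i. if S hA i = {} then Nn else tp (?c i) Nn"
  have vY1: "valid_profile ?Y1" unfolding valid_profile_def by (simp add: N0_strict tp_strict)
  have O1: "outcome S (\<lambda>k. \<Sigma> k (?P0 k)) hA = \<phi> (liftP hA ?Y1)"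
  proof -
    have "outcome S (\<lambda>k. \<Sigma> k (?P0 k)) hA = \<phi> (liftP (mstep S (\<lambda>k. \<Sigma> k (?P0 k)) hA) ?P0)"
    proof (rule out_succ[OF r ne vstrat_sig[OF v0] v0])
      fix x i assume "reachable S x" "meas x < meas hA" "S x i \<noteq> {}"
      then show "\<Sigma> i (?P0 i) (x i) (S x i) = best (?P0 i) (S x i)"
        using IH N0_strict unfolding claim_def by blast
    qed
    also have "\<dots> = \<phi> (liftP hA ?Y1)" unfolding liftP_mstep by simp
    finally show ?thesis .
  qed
  have nullmv: "\<phi> (liftP hA ?Y1) i = null" if mvi: "S hA i \<noteq> {}" for i
  proof -
    let ?\<sigma>2 = "(\<lambda>k. \<Sigma> k (?P0 k))(i := straightforward Nn)"
    have vs2: "vstrat ?\<sigma>2" using vstrat_upd[OF vstrat_sig[OF v0] valid_sf[OF N0_strict]] .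
    have O2: "outcome S ?\<sigma>2 hA = \<phi> (liftP hA (?Y1(i := Nn)))"
    proof -
      have "outcome S ?\<sigma>2 hA = \<phi> (liftP (mstep S ?\<sigma>2 hA) ?P0)"
      proof (rule out_succ[OF r ne vs2 v0])
        fix x k assume rx: "reachable S x" and mx: "meas x < meas hA" and nk: "S x k \<noteq> {}"
        have "claim x" using IH[OF rx mx] .
        then have "\<Sigma> k Nn (x k) (S x k) = best Nn (S x k)" using N0_strict nk unfolding claim_def by blast
        then show "?\<sigma>2 k (x k) (S x k) = best (?P0 k) (S x k)"
          by (cases "k = i") (simp_all add: straightforward_def)
      qed
      also have "\<dots> = \<phi> (liftP hA (?Y1(i := Nn)))"
      proof -
        have "best Nn (S hA i) = null" using best_Nn null_in_menu[OF r mvi] by blast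
        then have "(\<lambda>k. if S hA k = {} then ?P0 k else tp (?\<sigma>2 k (hA k) (S hA k)) (?P0 k)) = ?Y1(i := Nn)"
        proof -
          assume bn: "best Nn (S hA i) = null"
          show ?thesis
          proof
            fix k show "(if S hA k = {} then ?P0 k else tp (?\<sigma>2 k (hA k) (S hA k)) (?P0 k)) = (?Y1(i := Nn)) k"
              using mvi bn tp_N0[of null] by (cases "k = i"; cases "S hA k = {}") (simp_all add: straightforward_def)
          qed
        qed
        then show ?thesis unfolding liftP_mstep by simp
      qed
      finally show ?thesis .
    qed
    have "\<phi> (liftP hA (?Y1(i := Nn))) i = null" using mover_null[OF r vY1 mvi] .
    then have "weak Nn (\<phi> (liftP hA ?Y1) i) null"
      using PEPE_app[OF r valid_sf[OF N0_strict[of null]] v0, of i] O1 O2 by simp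
    then show ?thesis by (rule weak_N0)
  qed
  let ?F = "{i. S hA i \<noteq> {}} - {b}"
  have sc: "\<phi> (liftP hA (ovr ?Y1 ?F Nn)) = \<phi> (liftP hA ?Y1)"
    by (rule swap_chain[OF r vY1]) (use nullmv in auto)
  have ov: "ovr ?Y1 ?F Nn = (\<lambda>i. if i = b then tp (?c b) Nn else Nn)"
    unfolding ovr_def using mvb by (intro ext) auto
  have "\<phi> (liftP hA (\<lambda>i. if i = b then tp (?c b) Nn else Nn)) b = ?c b"
    using lift_get[OF r mvb sig_in[OF N0_strict mvb] N0_strict] .
  then show ?thesis using sc ov nullmv[OF mvb] by simp
qed

lemma main_step:
  assumes r: "reachable S hA" and IH: "\<And>g. reachable S g \<Longrightarrow> meas g < meas hA \<Longrightarrow> claim g"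
    and mva: "S hA a \<noteq> {}" and sp: "strict_pref p"
  shows "\<Sigma> a p (hA a) (S hA a) = best p (S hA a)"
proof (rule ccontr)
  let ?y = "\<Sigma> a p (hA a) (S hA a)" and ?x = "best p (S hA a)"
  assume yx: "?y \<noteq> ?x"
  have ne: "\<not> (\<forall>i. S hA i = {})" using mva by blast
  have yin: "?y \<in> S hA a" using sig_in[OF sp mva] .
  have xin: "?x \<in> S hA a" using best_in[OF sp mva] .
  let ?P = "\<lambda>i. if i = a then p else Nn"
  have vP: "valid_profile ?P" unfolding valid_profile_def by (simp add: N0_strict sp)
  have ncs: "\<Sigma> i Nn (hA i) (S hA i) = null" if "S hA i \<noteq> {}" for i using nc[OF r IH that] .
  have O1: "outcome S (\<lambda>k. \<Sigma> k (?P k)) hA = \<phi> (liftP hA (\<lambda>i. if i = a then tp ?y p else Nn))"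
  proof -
    have "outcome S (\<lambda>k. \<Sigma> k (?P k)) hA = \<phi> (liftP (mstep S (\<lambda>k. \<Sigma> k (?P k)) hA) ?P)"
    proof (rule out_succ[OF r ne vstrat_sig[OF vP] vP])
      fix x i assume "reachable S x" "meas x < meas hA" "S x i \<noteq> {}"
      moreover have "strict_pref (?P i)" using vP unfolding valid_profile_def by blast
      ultimately show "\<Sigma> i (?P i) (x i) (S x i) = best (?P i) (S x i)"
        using IH unfolding claim_def by blast
    qed
    also have "\<dots> = \<phi> (liftP hA (\<lambda>i. if i = a then tp ?y p else Nn))"
    proof -
      have "(\<lambda>i. if S hA i = {} then ?P i else tp (\<Sigma> i (?P i) (hA i) (S hA i)) (?P i))
          = (\<lambda>i. if i = a then tp ?y p else Nn)"
      proof
        fix i show "(if S hA i = {} then ?P i else tp (\<Sigma> i (?P i) (hA i) (S hA i)) (?P i))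
          = (if i = a then tp ?y p else Nn)"
          using mva ncs[of i] tp_N0[of null] by (cases "i = a"; cases "S hA i = {}") simp_all
      qed
      then show ?thesis unfolding liftP_mstep by simp
    qed
    finally show ?thesis .
  qed
  let ?\<sigma>' = "\<lambda>h \<Omega>. if h = hA a \<and> \<Omega> = S hA a then ?x else best p \<Omega>"
  have vs': "valid_strategy ?\<sigma>'" unfolding valid_strategy_def using xin best_in[OF sp] by auto
  let ?\<sigma>2 = "(\<lambda>k. \<Sigma> k (?P k))(a := ?\<sigma>')"
  have vs2: "vstrat ?\<sigma>2" using vstrat_upd[OF vstrat_sig[OF vP] vs'] .
  have O2: "outcome S ?\<sigma>2 hA = \<phi> (liftP hA (\<lambda>i. if i = a then tp ?x p else Nn))"
  proof -
    have "outcome S ?\<sigma>2 hA = \<phi> (liftP (mstep S ?\<sigma>2 hA) ?P)"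
    proof (rule out_succ[OF r ne vs2 vP])
      fix x i assume rx: "reachable S x" and mx: "meas x < meas hA"
        and ex: "\<forall>k. \<exists>e. x k = mstep S ?\<sigma>2 hA k @ e" and nx: "S x i \<noteq> {}"
      show "?\<sigma>2 i (x i) (S x i) = best (?P i) (S x i)"
      proof (cases "i = a")
        case True
        obtain e where "x a = mstep S ?\<sigma>2 hA a @ e" using ex by blast
        moreover have "mstep S ?\<sigma>2 hA a = hA a @ [(S hA a, ?\<sigma>2 a (hA a) (S hA a))]"
          using mva unfolding mstep_def by simp
        ultimately have "x a \<noteq> hA a" by simp
        then show ?thesis using True by simp
      next
        case False
        have "claim x" using IH[OF rx mx] .
        then have "\<Sigma> i Nn (x i) (S x i) = best Nn (S x i)" using N0_strict nx unfolding claim_def by blast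
        then show ?thesis using False by simp
      qed
    qed
    also have "\<dots> = \<phi> (liftP hA (\<lambda>i. if i = a then tp ?x p else Nn))"
    proof -
      have "(\<lambda>i. if S hA i = {} then ?P i else tp (?\<sigma>2 i (hA i) (S hA i)) (?P i))
          = (\<lambda>i. if i = a then tp ?x p else Nn)"
      proof
        fix i show "(if S hA i = {} then ?P i else tp (?\<sigma>2 i (hA i) (S hA i)) (?P i))
          = (if i = a then tp ?x p else Nn)"
          using mva ncs[of i] tp_N0[of null] by (cases "i = a"; cases "S hA i = {}") simp_all
      qed
      then show ?thesis unfolding liftP_mstep by simp
    qed
    finally show ?thesis .
  qed
  have g1: "\<phi> (liftP hA (\<lambda>i. if i = a then tp ?y p else Nn)) a = ?y" using lift_get[OF r mva yin sp] .
  have g2: "\<phi> (liftP hA (\<lambda>i. if i = a then tp ?x p else Nn)) a = ?x" using lift_get[OF r mva xin sp] .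
  have "weak (?P a) (outcome S (\<lambda>k. \<Sigma> k (?P k)) hA a) (outcome S ?\<sigma>2 hA a)"
    using PEPE_app[OF r vs' vP] .
  then have w: "weak p ?y ?x" using O1 O2 g1 g2 by simp
  have "p ?x ?y" using best_prop[OF sp mva] yin yx by blast
  then show False using weak_not[OF sp w] by blast
qed

lemma claim_all: "reachable S h \<Longrightarrow> claim h"
proof (induction "meas h" arbitrary: h rule: less_induct)
  case less
  show ?case unfolding claim_def
  proof (intro allI impI)
    fix b and p :: "'o pref" assume sp: "strict_pref p" and mv: "S h b \<noteq> {}"
    show "\<Sigma> b p (h b) (S h b) = best p (S h b)"
      by (rule main_step[OF less.prems _ mv sp]) (use less.hyps in blast)
  qed
qed

end

theorem proposition2:
  fixes null :: "'o::finite"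
    and \<phi> :: "('a::finite, 'o) rule"
    and S :: "('a, 'o) menufun"
  assumes IR: "individually_rational null \<phi>"
    and RM: "resource_monotonic null \<phi>"
    and SP: "strategy_proof \<phi>"
    and MD: "monotonic_discoverability \<phi>"
    and canon: "S = canonical_menu \<phi>"
    and PAO: "is_PAO S"
    and seq: "sequentializes S \<phi>"
  shows "valid_type_strategy (\<lambda>a::'a. straightforward :: 'o pref \<Rightarrow> 'o strategy)
       \<and> perfect_ex_post_eq S (\<lambda>a. straightforward)
       \<and> (\<forall>\<Sigma>. valid_type_strategy \<Sigma> \<and> perfect_ex_post_eq S \<Sigma> \<longrightarrow>
            (\<forall>a p hA. strict_pref p \<longrightarrow> reachable S hA \<longrightarrow> S hA a \<noteq> {} \<longrightarrow>
               \<Sigma> a p (hA a) (S hA a) = straightforward p (hA a) (S hA a)))"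
proof -
  interpret C: canon_mech S null \<phi>
    by unfold_locales (use IR RM SP MD canon PAO seq in blast)+
  have 1: "valid_type_strategy (\<lambda>a::'a. straightforward :: 'o pref \<Rightarrow> 'o strategy)"
    unfolding valid_type_strategy_def valid_strategy_def straightforward_def using best_in by blast
  have 2: "perfect_ex_post_eq S (\<lambda>a::'a. straightforward :: 'o pref \<Rightarrow> 'o strategy)"
    by (rule C.sf_pepe)
  have 3: "\<forall>\<Sigma>. valid_type_strategy \<Sigma> \<and> perfect_ex_post_eq S \<Sigma> \<longrightarrow>
            (\<forall>a p hA. strict_pref p \<longrightarrow> reachable S hA \<longrightarrow> S hA a \<noteq> {} \<longrightarrow>
               \<Sigma> a p (hA a) (S hA a) = straightforward p (hA a) (S hA a))"
  proof (intro allI impI)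
    fix \<Sigma> :: "'a \<Rightarrow> 'o pref \<Rightarrow> 'o strategy" and a and p :: "'o pref" and hA
    assume H: "valid_type_strategy \<Sigma> \<and> perfect_ex_post_eq S \<Sigma>"
      and sp: "strict_pref p" and r: "reachable S hA" and mv: "S hA a \<noteq> {}"
    interpret U: uniq S null \<phi> \<Sigma>
      by unfold_locales (use H in blast)+
    have "U.claim hA" using U.claim_all[OF r] .
    then show "\<Sigma> a p (hA a) (S hA a) = straightforward p (hA a) (S hA a)"
      using sp mv unfolding U.claim_def straightforward_def by blast
  qed
  show ?thesis using 1 2 3 by blast
qed

end
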